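(* There exist constants $C>0$, $\alpha>0$ and $T_0>0$ such that for all $T\ge T_0$ and all $B\in(-\frac1{3T},\frac1{3T})$, $$\|e^{\alpha\tau}\tilde u^{\{T\}}_B\|_{L^2((0,T),d\tau)}\le C.$$
   Context: For $B\in\mathbb R$ and $T>0$ with $|B|T<\frac13$, $\mathcal H^{\{T\}}_B$ is the self-adjoint operator in $L^2((0,T),(1-B\tau)d\tau)$ associated with the quadratic form $u\mapsto\int_0^T|u'(\tau)|^2(1-B\tau)\,d\tau-|u(0)|^2$ on $\{u\in H^1(0,T):u(T)=0\}$ (formally $-\frac{d^2}{d\tau^2}+\frac{B}{1-B\tau}\frac{d}{d\tau}$ with $u'(0)=-u(0)$, $u(T)=0$). Let $u^{\{T\}}_B$ be a ground state (eigenfunction for its lowest eigenvalue $\lambda_1(\mathcal H^{\{T\}}_B)$) normalized in $L^2((0,T),(1-B\tau)d\tau)$, and $\tilde u^{\{T\}}_B(\tau)=(1-B\tau)^{1/2}u^{\{T\}}_B(\tau)$, which is normalized in $L^2((0,T),d\tau)$. *)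

theory Defs
  imports "HOL-Analysis.Analysis"
begin

definition H1_with_deriv :: "real \<Rightarrow> (real \<Rightarrow> real) \<Rightarrow> (real \<Rightarrow> real) \<Rightarrow> bool" where
  "H1_with_deriv T u u' \<longleftrightarrow>
     set_integrable lborel {0..T} u' \<and>
     set_integrable lborel {0..T} (\<lambda>x. (u' x)\<^sup>2) \<and>
     (\<forall>x\<in>{0..T}. u x = u 0 + (LBINT s=0..x. u' s))"

definition form_dom :: "real \<Rightarrow> (real \<Rightarrow> real) \<Rightarrow> (real \<Rightarrow> real) \<Rightarrow> bool" where
  "form_dom T u u' \<longleftrightarrow> H1_with_deriv T u u' \<and> u T = 0"

text \<open>Eigenpair of the operator H_B^{T} associated with the quadratic form
  q(u) = int_0^T |u'|^2 (1 - B tau) dtau - |u(0)|^2 in L^2((0,T),(1-B tau)dtau):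
  u in the form domain, u nonzero, and q(u,v) = lambda <u,v> for all v in the form domain.\<close>
definition is_eigenpair :: "real \<Rightarrow> real \<Rightarrow> real \<Rightarrow> (real \<Rightarrow> real) \<Rightarrow> bool" where
  "is_eigenpair B T lam u \<longleftrightarrow>
     (\<exists>u'. form_dom T u u' \<and>
        (LBINT x=0..T. (u x)\<^sup>2 * (1 - B * x)) \<noteq> 0 \<and>
        (\<forall>v v'. form_dom T v v' \<longrightarrow>
           (LBINT x=0..T. u' x * v' x * (1 - B * x)) - u 0 * v 0
             = lam * (LBINT x=0..T. u x * v x * (1 - B * x))))"

definition is_normalized_ground_state :: "real \<Rightarrow> real \<Rightarrow> real \<Rightarrow> (real \<Rightarrow> real) \<Rightarrow> bool" where
  "is_normalized_ground_state B T lam u \<longleftrightarrow>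
     is_eigenpair B T lam u \<and>
     (\<forall>mu v. is_eigenpair B T mu v \<longrightarrow> lam \<le> mu) \<and>
     (LBINT x=0..T. (u x)\<^sup>2 * (1 - B * x)) = 1"

end

theory Submission
  imports Defs
begin

lemma int_upper_deriv:
  fixes f :: "real \<Rightarrow> real"
  assumes "continuous_on {a..b} f" "x \<in> {a..b}"
  shows "((\<lambda>x. integral {x..b} f) has_real_derivative - f x) (at x within {a..b})"
proof -
  have int: "f integrable_on {a..b}" using assms(1) integrable_continuous_real by blast
  have eq: "integral {y..b} f = integral {a..b} f - integral {a..y} f" if "y \<in> {a..b}" for y
    using Henstock_Kurzweil_Integration.integral_combine[OF _ _ int, of y] that by auto
  have "((\<lambda>y. integral {a..b} f - integral {a..y} f) has_real_derivative 0 - f x) (at x within {a..b})"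
    by (intro derivative_intros integral_has_real_derivative assms)
  then have "((\<lambda>y. integral {a..b} f - integral {a..y} f) has_real_derivative - f x) (at x within {a..b})"
    by simp
  then show ?thesis
  proof (rule has_field_derivative_transform_within[where d=1])
    show "x \<in> {a..b}" by (rule assms(2))
  next
    fix y assume "y \<in> {a..b}"
    then show "integral {a..b} f - integral {a..y} f = integral {y..b} f" by (rule eq[symmetric])
  qed simp
qed

lemma int_upper_cont:
  fixes f :: "real \<Rightarrow> real"
  assumes "continuous_on {a..b} f"
  shows "continuous_on {a..b} (\<lambda>x. integral {x..b} f)"
  using int_upper_deriv[OF assms] 
  by (meson DERIV_continuous continuous_on_eq_continuous_within)

fun PP :: "real \<Rightarrow> real \<Rightarrow> nat \<Rightarrow> real \<Rightarrow> real" where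
  "PP B T 0 x = -1"
| "PP B T (Suc n) x = - integral {x..T} (\<lambda>t. (1 - B*t) * integral {t..T} (\<lambda>y. (- PP B T n y) / (1 - B*y)))"

definition AA :: "real \<Rightarrow> real \<Rightarrow> nat \<Rightarrow> real \<Rightarrow> real" where
  "AA B T n x = integral {x..T} (\<lambda>y. (- PP B T n y) / (1 - B*y))"

lemma PP_Suc: "PP B T (Suc n) x = - integral {x..T} (\<lambda>t. (1 - B*t) * AA B T n t)"
  by (simp add: AA_def)

locale bt =
  fixes B T :: real
  assumes Tpos: "0 < T" and BT: "\<bar>B\<bar> * T < 1/3"
begin

lemma rho_bounds: assumes "x \<in> {0..T}" shows "2/3 \<le> 1 - B*x" "1 - B*x \<le> 4/3" "1 - B*x > 0"
proof -
  have x: "\<bar>x\<bar> \<le> T" using assms by auto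
  have "\<bar>B*x\<bar> \<le> \<bar>B\<bar> * T" unfolding abs_mult by (rule mult_left_mono[OF x]) simp
  then have "\<bar>B*x\<bar> < 1/3" using BT by linarith
  then show "2/3 \<le> 1 - B*x" "1 - B*x \<le> 4/3" "1 - B*x > 0" by (simp_all add: abs_less_iff)
qed


lemma int_pow:
  assumes "x \<le> T"
  shows "integral {x..T} (\<lambda>t. c * (T-t)^k / fact k) = c * (T-x)^(Suc k) / fact (Suc k)"
proof -
  have "((\<lambda>t. c * (T-t)^k / fact k) has_integral
         ((\<lambda>t. - c * (T-t)^(Suc k) / fact (Suc k)) T - (\<lambda>t. - c * (T-t)^(Suc k) / fact (Suc k)) x)) {x..T}"
  proof (rule fundamental_theorem_of_calculus[OF assms])
    fix t assume "t \<in> {x..T}"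
    have "((\<lambda>t. - c * (T-t)^(Suc k) / fact (Suc k)) has_real_derivative
            - c * (real (Suc k) * (T-t)^k * (0 - 1)) / fact (Suc k)) (at t within {x..T})"
      by (intro derivative_eq_intros) auto
    moreover have "- c * (real (Suc k) * (T-t)^k * (0 - 1)) / fact (Suc k) = c * (T-t)^k / fact k"
    proof -
      have p: "(0::real) < fact k + fact k * real k" by (simp add: add_pos_nonneg)
      show ?thesis using p by (simp add: fact_Suc field_simps)
    qed
    ultimately show "((\<lambda>t. - c * (T-t)^(Suc k) / fact (Suc k)) has_vector_derivative c * (T-t)^k / fact k) (at t within {x..T})"
      by (simp add: has_real_derivative_iff_has_vector_derivative)
  qed
  then have "integral {x..T} (\<lambda>t. c * (T-t)^k / fact k) = (\<lambda>t. - c * (T-t)^(Suc k) / fact (Suc k)) T - (\<lambda>t. - c * (T-t)^(Suc k) / fact (Suc k)) x"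
    by (rule integral_unique)
  then show ?thesis by simp
qed

lemma upper_int_props:
  fixes f :: "real \<Rightarrow> real"
  assumes cont: "continuous_on {0..T} f" and bnd: "\<And>t. t \<in> {0..T} \<Longrightarrow> \<bar>f t\<bar> \<le> c * (T-t)^k / fact k"
  shows "continuous_on {0..T} (\<lambda>x. integral {x..T} f)"
    and "\<And>x. x \<in> {0..T} \<Longrightarrow> \<bar>integral {x..T} f\<bar> \<le> c * (T-x)^(Suc k) / fact (Suc k)"
    and "\<And>x. x \<in> {0..T} \<Longrightarrow> (\<And>t. t \<in> {0..T} \<Longrightarrow> f t \<ge> 0) \<Longrightarrow> integral {x..T} f \<ge> 0"
proof -
  show "continuous_on {0..T} (\<lambda>x. integral {x..T} f)" by (rule int_upper_cont[OF cont])
next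
  fix x assume x: "x \<in> {0..T}"
  have sub: "{x..T} \<subseteq> {0..T}" using x by auto
  have i1: "f integrable_on {x..T}"
    by (rule integrable_continuous_interval, rule continuous_on_subset[OF cont sub])
  have i2: "(\<lambda>t. c * (T-t)^k / fact k) integrable_on {x..T}"
    by (rule integrable_continuous_interval) (intro continuous_intros, auto)
  have "norm (integral {x..T} f) \<le> integral {x..T} (\<lambda>t. c * (T-t)^k / fact k)"
    by (rule integral_norm_bound_integral[OF i1 i2]) (use bnd sub in auto)
  also have "\<dots> = c * (T-x)^(Suc k) / fact (Suc k)" by (rule int_pow) (use x in auto)
  finally show "\<bar>integral {x..T} f\<bar> \<le> c * (T-x)^(Suc k) / fact (Suc k)" by simp
  assume "\<And>t. t \<in> {0..T} \<Longrightarrow> f t \<ge> 0"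
  then show "integral {x..T} f \<ge> 0" by (intro integral_nonneg[OF i1]) (use sub in auto)
qed

lemma AA_props:
  assumes cP: "continuous_on {0..T} (PP B T n)"
    and sP: "\<And>x. x \<in> {0..T} \<Longrightarrow> PP B T n x \<le> 0"
    and bP: "\<And>x. x \<in> {0..T} \<Longrightarrow> \<bar>PP B T n x\<bar> \<le> 2^n * (T - x)^(2*n) / fact (2*n)"
  shows "continuous_on {0..T} (AA B T n) \<and>
   (\<forall>x\<in>{0..T}. AA B T n x \<ge> 0 \<and> \<bar>AA B T n x\<bar> \<le> 3/2 * 2^n * (T - x)^(2*n+1) / fact (2*n+1))"
proof -
  define f where "f y = (- PP B T n y) / (1 - B*y)" for y
  have cf: "continuous_on {0..T} f" unfolding f_def
    by (intro continuous_intros cP) (use rho_bounds in fastforce)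
  have bf: "\<bar>f t\<bar> \<le> (3/2 * 2^n) * (T-t)^(2*n) / fact (2*n)" if t: "t \<in> {0..T}" for t
  proof -
    have r: "2/3 \<le> 1 - B*t" "1 - B*t > 0" using rho_bounds[OF t] by auto
    have "\<bar>f t\<bar> = \<bar>PP B T n t\<bar> / (1 - B*t)" unfolding f_def using r by simp
    also have "\<dots> \<le> \<bar>PP B T n t\<bar> / (2/3)" by (rule divide_left_mono) (use r in auto)
    also have "\<dots> \<le> (2^n * (T - t)^(2*n) / fact (2*n)) / (2/3)"
      by (rule divide_right_mono) (use bP[OF t] in auto)
    also have "\<dots> = (3/2 * 2^n) * (T-t)^(2*n) / fact (2*n)" by simp
    finally show ?thesis .
  qed
  have sf: "f t \<ge> 0" if t: "t \<in> {0..T}" for t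
    unfolding f_def by (rule divide_nonneg_pos) (use rho_bounds[OF t] sP[OF t] in auto)
  have U1: "continuous_on {0..T} (\<lambda>x. integral {x..T} f)" by (rule upper_int_props(1)[OF cf bf])
  have U2: "\<bar>integral {x..T} f\<bar> \<le> (3/2 * 2^n) * (T-x)^(Suc (2*n)) / fact (Suc (2*n))" if "x \<in> {0..T}" for x
    by (rule upper_int_props(2)[OF cf bf that])
  have U3: "integral {x..T} f \<ge> 0" if "x \<in> {0..T}" for x
    by (rule upper_int_props(3)[OF cf bf that sf])
  have eqA: "AA B T n = (\<lambda>x. integral {x..T} f)" unfolding f_def by (simp add: AA_def fun_eq_iff)
  show ?thesis unfolding eqA using U1 U2 U3 by simp
qed

lemma PP_props:
  "continuous_on {0..T} (PP B T n) \<and> continuous_on {0..T} (AA B T n) \<and>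
   (\<forall>x\<in>{0..T}. PP B T n x \<le> 0 \<and> AA B T n x \<ge> 0 \<and>
      \<bar>PP B T n x\<bar> \<le> 2^n * (T - x)^(2*n) / fact (2*n) \<and>
      \<bar>AA B T n x\<bar> \<le> 3/2 * 2^n * (T - x)^(2*n+1) / fact (2*n+1))"
proof (induction n)
  case 0
  show ?case using AA_props[of 0] by (simp add: continuous_on_const) (use abs_of_nonneg in fastforce)
next
  case (Suc n)
  then have cA: "continuous_on {0..T} (AA B T n)"
    and sA: "\<And>x. x \<in> {0..T} \<Longrightarrow> AA B T n x \<ge> 0"
    and bA: "\<And>x. x \<in> {0..T} \<Longrightarrow> \<bar>AA B T n x\<bar> \<le> 3/2 * 2^n * (T - x)^(2*n+1) / fact (2*n+1)" by blast+
  define g where "g t = (1 - B*t) * AA B T n t" for t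
  have cg: "continuous_on {0..T} g" unfolding g_def by (intro continuous_intros cA)
  have bg: "\<bar>g t\<bar> \<le> 2^(Suc n) * (T-t)^(2*n+1) / fact (2*n+1)" if t: "t \<in> {0..T}" for t
  proof -
    have "\<bar>g t\<bar> = (1 - B*t) * \<bar>AA B T n t\<bar>" unfolding g_def using rho_bounds[OF t] by (simp add: abs_mult)
    also have "\<dots> \<le> 4/3 * (3/2 * 2^n * (T - t)^(2*n+1) / fact (2*n+1))"
      by (rule mult_mono) (use rho_bounds[OF t] bA[OF t] in auto)
    also have "\<dots> = 2^(Suc n) * (T-t)^(2*n+1) / fact (2*n+1)" by (simp add: mult_ac)
    finally show ?thesis .
  qed
  have sg: "g t \<ge> 0" if t: "t \<in> {0..T}" for t
    unfolding g_def using rho_bounds[OF t] sA[OF t] by simp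
  have U1: "continuous_on {0..T} (\<lambda>x. integral {x..T} g)" by (rule upper_int_props(1)[OF cg bg])
  have U2: "\<bar>integral {x..T} g\<bar> \<le> 2^(Suc n) * (T-x)^(Suc (2*n+1)) / fact (Suc (2*n+1))" if "x \<in> {0..T}" for x
    by (rule upper_int_props(2)[OF cg bg that])
  have U3: "integral {x..T} g \<ge> 0" if "x \<in> {0..T}" for x
    by (rule upper_int_props(3)[OF cg bg that sg])
  have eqP: "PP B T (Suc n) = (\<lambda>x. - integral {x..T} g)" unfolding g_def by (rule ext, rule PP_Suc)
  have cP: "continuous_on {0..T} (PP B T (Suc n))" unfolding eqP by (intro continuous_intros U1)
  have sP: "PP B T (Suc n) x \<le> 0" if x: "x \<in> {0..T}" for x
    unfolding eqP using U3[OF x] by simp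
  have bP: "\<bar>PP B T (Suc n) x\<bar> \<le> 2^(Suc n) * (T - x)^(2*(Suc n)) / fact (2*(Suc n))" if x: "x \<in> {0..T}" for x
    unfolding eqP using U2[OF x] by simp
  show ?case using AA_props[of "Suc n", OF cP sP bP] cP sP bP by auto
qed


lemma pow_fact_le:
  assumes "x \<in> {0..T}" "k \<le> j" "c \<ge> 0"
  shows "c * (T-x)^j / fact j \<le> c * T^j / fact k"
proof -
  have "(T-x)^j \<le> T^j" by (rule power_mono) (use assms in auto)
  then have "c * (T-x)^j \<le> c * T^j" by (rule mult_left_mono) (use assms in auto)
  then have "c * (T-x)^j / fact j \<le> c * T^j / fact j" by (rule divide_right_mono) simp
  also have "\<dots> \<le> c * T^j / fact k"
    by (rule divide_left_mono) (use assms Tpos in \<open>auto intro: fact_mono\<close>)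
  finally show ?thesis .
qed

lemma PP_bnd: assumes "x \<in> {0..T}" shows "\<bar>PP B T n x\<bar> \<le> (2*T^2)^n / fact n"
proof -
  have "\<bar>PP B T n x\<bar> \<le> 2^n * (T - x)^(2*n) / fact (2*n)" using PP_props assms by blast
  also have "\<dots> \<le> 2^n * T^(2*n) / fact n" by (rule pow_fact_le) (use assms in auto)
  also have "\<dots> = (2*T^2)^n / fact n" by (simp add: power_mult power_mult_distrib)
  finally show ?thesis .
qed

lemma AA_bnd: assumes "x \<in> {0..T}" shows "\<bar>AA B T n x\<bar> \<le> 2*T*(2*T^2)^n / fact n"
proof -
  have "\<bar>AA B T n x\<bar> \<le> 3/2 * 2^n * (T - x)^(2*n+1) / fact (2*n+1)" using PP_props assms by blast
  also have "\<dots> \<le> 3/2 * 2^n * T^(2*n+1) / fact n" by (rule pow_fact_le) (use assms in auto)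
  also have "\<dots> = 3/2*T*(2*T^2)^n / fact n" by (simp add: power_mult power_mult_distrib)
  also have "\<dots> \<le> 2*T*(2*T^2)^n / fact n" by (rule divide_right_mono) (use Tpos in auto)
  finally show ?thesis .
qed

lemma rAA_bnd: assumes "x \<in> {0..T}" shows "\<bar>(1 - B*x) * AA B T n x\<bar> \<le> (1/T) * (2*T^2)^(Suc n) / fact (Suc n)"
proof -
  have r: "1 - B*x \<le> 4/3" "0 < 1 - B*x" using rho_bounds[OF assms] by auto
  have "\<bar>AA B T n x\<bar> \<le> 3/2 * 2^n * (T - x)^(2*n+1) / fact (2*n+1)" using PP_props assms by blast
  also have "\<dots> \<le> 3/2 * 2^n * T^(2*n+1) / fact (Suc n)" by (rule pow_fact_le) (use assms in auto)
  finally have a: "\<bar>AA B T n x\<bar> \<le> 3/2 * 2^n * T^(2*n+1) / fact (Suc n)" .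
  have "\<bar>(1 - B*x) * AA B T n x\<bar> = (1 - B*x) * \<bar>AA B T n x\<bar>" using r by (simp add: abs_mult)
  also have "\<dots> \<le> 4/3 * (3/2 * 2^n * T^(2*n+1) / fact (Suc n))"
    by (rule mult_mono) (use r a in auto)
  also have "\<dots> = (1/T) * (2*T^2)^(Suc n) / fact (Suc n)"
  proof -
    have e1: "(2*T^2)^(Suc n) = 2^(Suc n) * T^(2*Suc n)" by (simp add: power_mult_distrib power_mult power2_eq_square)
    have e2: "T^(2*Suc n) = T * T^(2*n+1)" by simp
    have "4/3 * (3/2 * 2^n * T^(2*n+1)) = (1/T) * (2*T^2)^(Suc n)"
      unfolding e1 e2 using Tpos by simp
    then show ?thesis by simp
  qed
  finally show ?thesis .
qed

lemma summable_expo: fixes a c :: real shows "summable (\<lambda>n. c * (a^n / fact n))"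
  using summable_mult[OF summable_exp[of a]] by (simp add: field_simps)

definition VV :: "real \<Rightarrow> real \<Rightarrow> real" where "VV m x = (\<Sum>n. m^n * AA B T n x)"
definition QQ :: "real \<Rightarrow> real \<Rightarrow> real" where "QQ m x = (\<Sum>n. m^n * PP B T n x)"

lemma summable_AA: assumes "x \<in> {0..T}" shows "summable (\<lambda>n. m^n * AA B T n x)"
proof (rule summable_comparison_test'[OF summable_expo[of "2*T" "\<bar>m\<bar>*(2*T^2)"]])
  fix n
  have "norm (m^n * AA B T n x) = \<bar>m\<bar>^n * \<bar>AA B T n x\<bar>" by (simp add: abs_mult power_abs)
  also have "\<dots> \<le> \<bar>m\<bar>^n * (2*T*(2*T^2)^n / fact n)" by (rule mult_left_mono[OF AA_bnd[OF assms]]) simp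
  also have "\<dots> = 2*T*((\<bar>m\<bar>*(2*T^2))^n / fact n)" by (simp add: power_mult_distrib)
  finally show "norm (m^n * AA B T n x) \<le> 2*T*((\<bar>m\<bar>*(2*T^2))^n / fact n)" .
qed

lemma summable_PP: assumes "x \<in> {0..T}" shows "summable (\<lambda>n. m^n * PP B T n x)"
proof (rule summable_comparison_test'[OF summable_expo[of 1 "\<bar>m\<bar>*(2*T^2)"]])
  fix n
  have "norm (m^n * PP B T n x) = \<bar>m\<bar>^n * \<bar>PP B T n x\<bar>" by (simp add: abs_mult power_abs)
  also have "\<dots> \<le> \<bar>m\<bar>^n * ((2*T^2)^n / fact n)" by (rule mult_left_mono[OF PP_bnd[OF assms]]) simp
  also have "\<dots> = 1*((\<bar>m\<bar>*(2*T^2))^n / fact n)" by (simp add: power_mult_distrib)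
  finally show "norm (m^n * PP B T n x) \<le> 1*((\<bar>m\<bar>*(2*T^2))^n / fact n)" .
qed


lemma AA_deriv: assumes x: "x \<in> {0..T}"
  shows "(AA B T n has_real_derivative PP B T n x / (1 - B*x)) (at x within {0..T})"
proof -
  have cP: "continuous_on {0..T} (PP B T n)" using PP_props by blast
  have cf: "continuous_on {0..T} (\<lambda>y. (- PP B T n y) / (1 - B*y))"
    by (intro continuous_intros cP) (use rho_bounds in fastforce)
  have eqA: "AA B T n = (\<lambda>x. integral {x..T} (\<lambda>y. (- PP B T n y) / (1 - B*y)))"
    by (simp add: AA_def fun_eq_iff)
  show ?thesis unfolding eqA using int_upper_deriv[OF cf x] by simp
qed

lemma PP_deriv: assumes x: "x \<in> {0..T}"
  shows "(PP B T (Suc n) has_real_derivative (1 - B*x) * AA B T n x) (at x within {0..T})"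
proof -
  have cA: "continuous_on {0..T} (AA B T n)" using PP_props by blast
  have cg: "continuous_on {0..T} (\<lambda>t. (1 - B*t) * AA B T n t)" by (intro continuous_intros cA)
  have eqP: "PP B T (Suc n) = (\<lambda>x. - integral {x..T} (\<lambda>t. (1 - B*t) * AA B T n t))"
    by (rule ext, rule PP_Suc)
  show ?thesis unfolding eqP using int_upper_deriv[OF cg x] DERIV_minus by fastforce
qed

lemma VV_deriv: assumes x: "x \<in> {0..T}"
  shows "(VV m has_real_derivative QQ m x / (1 - B*x)) (at x within {0..T})"
proof -
  have U: "uniform_limit {0..T} (\<lambda>N x. \<Sum>i<N. m^i * (PP B T i x / (1 - B*x)))
             (\<lambda>x. \<Sum>i. m^i * (PP B T i x / (1 - B*x))) sequentially"
  proof (rule Weierstrass_m_test[OF _ summable_expo[of "3/2" "\<bar>m\<bar>*(2*T^2)"]])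
    fix n y assume y: "y \<in> {0..T}"
    have r: "2/3 \<le> 1 - B*y" "0 < 1 - B*y" using rho_bounds[OF y] by auto
    have "norm (m^n * (PP B T n y / (1 - B*y))) = \<bar>m\<bar>^n * (\<bar>PP B T n y\<bar> / (1 - B*y))"
      using r by (simp add: abs_mult power_abs)
    also have "\<dots> \<le> \<bar>m\<bar>^n * (\<bar>PP B T n y\<bar> / (2/3))"
      by (rule mult_left_mono, rule divide_left_mono) (use r in auto)
    also have "\<dots> \<le> \<bar>m\<bar>^n * (((2*T^2)^n / fact n) / (2/3))"
      by (rule mult_left_mono, rule divide_right_mono) (use PP_bnd[OF y] in auto)
    also have "\<dots> = 3/2 * ((\<bar>m\<bar>*(2*T^2))^n / fact n)" by (simp add: power_mult_distrib)
    finally show "norm (m^n * (PP B T n y / (1 - B*y))) \<le> 3/2 * ((\<bar>m\<bar>*(2*T^2))^n / fact n)" .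
  qed
  have D: "\<And>n y. y \<in> {0..T} \<Longrightarrow> ((\<lambda>x. m^n * AA B T n x) has_field_derivative m^n * (PP B T n y / (1 - B*y))) (at y within {0..T})"
    by (intro DERIV_cmult AA_deriv) auto
  obtain g where g: "\<forall>y\<in>{0..T}. (\<lambda>n. m^n * AA B T n y) sums g y \<and>
      (g has_field_derivative (\<Sum>i. m^i * (PP B T i y / (1 - B*y)))) (at y within {0..T})"
    using has_field_derivative_series[OF _ D U, of 0] summable_AA[of 0] Tpos by auto
  have gV: "g y = VV m y" if "y \<in> {0..T}" for y
    using g that unfolding VV_def by (simp add: sums_iff)
  have "(g has_field_derivative (\<Sum>i. m^i * (PP B T i x / (1 - B*x)))) (at x within {0..T})"
    using g x by blast
  then have "(VV m has_field_derivative (\<Sum>i. m^i * (PP B T i x / (1 - B*x)))) (at x within {0..T})"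
    by (rule has_field_derivative_transform_within[where d=1]) (use x gV in auto)
  moreover have "(\<Sum>i. m^i * (PP B T i x / (1 - B*x))) = QQ m x / (1 - B*x)"
    unfolding QQ_def using suminf_divide[OF summable_PP[OF x, of m], of "1 - B*x"] by simp
  ultimately show ?thesis by simp
qed

lemma QQ_deriv: assumes x: "x \<in> {0..T}"
  shows "(QQ m has_real_derivative m * (1 - B*x) * VV m x) (at x within {0..T})"
proof -
  define f' where "f' n y = (case n of 0 \<Rightarrow> 0 | Suc k \<Rightarrow> m^(Suc k) * ((1 - B*y) * AA B T k y))" for n y
  have U: "uniform_limit {0..T} (\<lambda>N x. \<Sum>i<N. f' i x) (\<lambda>x. \<Sum>i. f' i x) sequentially"
  proof (rule Weierstrass_m_test[OF _ summable_expo[of "1/T" "\<bar>m\<bar>*(2*T^2)"]])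
    fix n y assume y: "y \<in> {0..T}"
    show "norm (f' n y) \<le> 1/T * ((\<bar>m\<bar>*(2*T^2))^n / fact n)"
    proof (cases n)
      case 0 then show ?thesis using Tpos by (simp add: f'_def)
    next
      case (Suc k)
      have "norm (f' n y) = \<bar>m\<bar>^(Suc k) * \<bar>(1 - B*y) * AA B T k y\<bar>"
        unfolding f'_def Suc by (simp add: abs_mult power_abs)
      also have "\<dots> \<le> \<bar>m\<bar>^(Suc k) * ((1/T) * (2*T^2)^(Suc k) / fact (Suc k))"
        by (rule mult_left_mono[OF rAA_bnd[OF y]]) simp
      also have "\<dots> = 1/T * ((\<bar>m\<bar>*(2*T^2))^n / fact n)" unfolding Suc by (simp add: power_mult_distrib)
      finally show ?thesis .
    qed
  qed
  have D: "\<And>n y. y \<in> {0..T} \<Longrightarrow> ((\<lambda>x. m^n * PP B T n x) has_field_derivative f' n y) (at y within {0..T})"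
  proof -
    fix n y assume y: "y \<in> {0..T}"
    show "((\<lambda>x. m^n * PP B T n x) has_field_derivative f' n y) (at y within {0..T})"
    proof (cases n)
      case 0 then show ?thesis by (simp add: f'_def)
    next
      case (Suc k)
      have "((\<lambda>x. m^Suc k * PP B T (Suc k) x) has_field_derivative m^Suc k * ((1-B*y)*AA B T k y)) (at y within {0..T})"
        by (rule DERIV_cmult[OF PP_deriv[OF y]])
      then show ?thesis unfolding Suc f'_def by (simp only: nat.case)
    qed
  qed
  obtain g where g: "\<forall>y\<in>{0..T}. (\<lambda>n. m^n * PP B T n y) sums g y \<and>
      (g has_field_derivative (\<Sum>i. f' i y)) (at y within {0..T})"
    using has_field_derivative_series[OF _ D U, of 0] summable_PP[of 0] Tpos by auto
  have gQ: "g y = QQ m y" if "y \<in> {0..T}" for y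
    using g that unfolding QQ_def by (simp add: sums_iff)
  have "(g has_field_derivative (\<Sum>i. f' i x)) (at x within {0..T})"
    using g x by blast
  then have "(QQ m has_field_derivative (\<Sum>i. f' i x)) (at x within {0..T})"
    by (rule has_field_derivative_transform_within[where d=1]) (use x gQ in auto)
  moreover have "(\<Sum>i. f' i x) = m * (1 - B*x) * VV m x"
  proof -
    have "(\<lambda>n. (m * (1 - B*x)) * (m^n * AA B T n x)) sums ((m * (1 - B*x)) * VV m x)"
      unfolding VV_def by (rule sums_mult, rule summable_sums, rule summable_AA[OF x])
    then have "(\<lambda>n. f' (Suc n) x) sums ((m * (1 - B*x)) * VV m x)"
      by (simp add: f'_def mult_ac)
    then have "(\<lambda>n. f' n x) sums ((m * (1 - B*x)) * VV m x)"
      by (subst (asm) sums_Suc_iff) (simp add: f'_def)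
    then show ?thesis by (simp add: sums_iff)
  qed
  ultimately show ?thesis by simp
qed

end

lemma barrier_up:
  fixes g g' :: "real \<Rightarrow> real"
  assumes ab: "a \<le> b"
    and D: "\<And>x. x \<in> {a..b} \<Longrightarrow> (g has_real_derivative g' x) (at x within {a..b})"
    and ga: "g a \<le> 0"
    and Z: "\<And>x. x \<in> {a..b} \<Longrightarrow> g x = 0 \<Longrightarrow> g' x < 0"
  shows "\<forall>x\<in>{a..b}. g x \<le> 0"
proof (rule ccontr)
  assume "\<not> (\<forall>x\<in>{a..b}. g x \<le> 0)"
  then obtain x1 where x1: "x1 \<in> {a..b}" "g x1 > 0" by auto
  have cont: "continuous_on {a..b} g"
    using D by (meson DERIV_continuous continuous_on_eq_continuous_within)
  have cont1: "continuous_on {a..x1} g" by (rule continuous_on_subset[OF cont]) (use x1 in auto)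
  define S where "S = {a..x1} \<inter> g -` {..0}"
  have clS: "closed S" unfolding S_def by (rule continuous_closed_preimage[OF cont1]) auto
  have aS: "a \<in> S" unfolding S_def using ga x1 by auto
  have bdd: "bdd_above S" unfolding S_def by (rule bdd_aboveI[of _ x1]) auto
  define x0 where "x0 = Sup S"
  have x0S: "x0 \<in> S" unfolding x0_def by (rule closed_contains_Sup[OF _ bdd clS]) (use aS in auto)
  have le: "y \<le> x0" if "y \<in> S" for y unfolding x0_def by (rule cSup_upper[OF that bdd])
  have x0: "a \<le> x0" "x0 \<le> x1" "g x0 \<le> 0" using x0S unfolding S_def by auto
  have lt: "x0 < x1" using x0 x1 by (cases "x0 = x1") auto
  have g0: "g x0 = 0"
  proof (rule ccontr)
    assume "g x0 \<noteq> 0"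
    then have "g x0 < 0" using x0 by auto
    have "continuous_on {x0..x1} g" by (rule continuous_on_subset[OF cont1]) (use x0 in auto)
    then obtain z where z: "x0 \<le> z" "z \<le> x1" "g z = 0"
      using IVT'[of g x0 0 x1] \<open>g x0 < 0\<close> x1 lt by auto
    then have "z \<in> S" unfolding S_def using x0 by auto
    then have "z \<le> x0" by (rule le)
    then show False using z \<open>g x0 < 0\<close> by auto
  qed
  have "x0 \<in> {a..b}" using x0 x1 by auto
  then have "g' x0 < 0" using Z g0 by auto
  then obtain d where d: "d > 0" "\<And>h. h > 0 \<Longrightarrow> x0 + h \<in> {a..b} \<Longrightarrow> h < d \<Longrightarrow> g x0 > g (x0 + h)"
    using has_real_derivative_neg_dec_right[OF D[OF \<open>x0 \<in> {a..b}\<close>]] by blast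
  define h where "h = min (d/2) (x1 - x0)"
  have h: "h > 0" "h < d" "x0 + h \<le> x1" using d lt unfolding h_def by auto
  have "g (x0 + h) < 0" using d(2)[OF h(1) _ h(2)] g0 h x0 x1 by auto
  then have "x0 + h \<in> S" unfolding S_def using h x0 by auto
  then show False using le h by fastforce
qed

lemma barrier_down:
  fixes g g' :: "real \<Rightarrow> real"
  assumes ab: "a \<le> b"
    and D: "\<And>x. x \<in> {a..b} \<Longrightarrow> (g has_real_derivative g' x) (at x within {a..b})"
    and gb: "g b \<le> 0"
    and Z: "\<And>x. x \<in> {a..b} \<Longrightarrow> g x = 0 \<Longrightarrow> g' x > 0"
  shows "\<forall>x\<in>{a..b}. g x \<le> 0"
proof -
  have img: "uminus ` {-b..-a} = {a..b::real}" by auto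
  have D2: "((\<lambda>y. g (-y)) has_real_derivative - g' (-y)) (at y within {-b..-a})" if y: "y \<in> {-b..-a}" for y
  proof -
    have "(g has_real_derivative g' (-y)) (at (-y) within uminus ` {-b..-a})"
      unfolding img using D[of "-y"] y by auto
    from DERIV_image_chain[OF this DERIV_minus[OF DERIV_ident]]
    show ?thesis by (simp add: o_def)
  qed
  have "\<forall>y\<in>{-b..-a}. g (-y) \<le> 0"
    by (rule barrier_up[OF _ D2]) (use ab gb Z in auto)
  then show ?thesis by (metis atLeastAtMost_iff neg_le_iff_le minus_minus)
qed


lemma rho_aux1: "2/3 \<le> (r::real) \<Longrightarrow> 1/r \<le> 3/2 \<Longrightarrow> 0 < 4*r - 1/r" by linarith
lemma rho_aux2: "(r::real) \<le> 4/3 \<Longrightarrow> 1/r \<ge> 3/4 \<Longrightarrow> 1/4*r - 1/r < 0" by linarith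
lemma rho_aux3: "(a::real) \<le> 1/3 \<Longrightarrow> 1/r \<ge> 3/4 \<Longrightarrow> a - 1/r \<le> -5/12" by linarith

context bt begin

lemma AA_T: "AA B T n T = 0" by (simp add: AA_def)

lemma VV_T: "VV m T = 0" by (simp add: VV_def AA_T)

lemma QQ_le: assumes "0 \<le> m" "x \<in> {0..T}" shows "QQ m x \<le> -1"
proof -
  have "QQ m x \<le> (\<Sum>n. if n = 0 then -1 else 0)"
    unfolding QQ_def
  proof (rule suminf_le)
    fix n show "m^n * PP B T n x \<le> (if n = 0 then -1 else 0)"
      using PP_props assms by (auto intro!: mult_nonneg_nonpos)
  qed (use summable_PP[OF assms(2)] in auto)
  also have "(\<Sum>n. if n = 0 then -1 else 0::real) = -1"
    using sums_single[of 0 "\<lambda>_. -1::real"] by (simp add: sums_iff)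
  finally show ?thesis .
qed

lemma VV_ge: assumes "0 \<le> m" "x \<in> {0..T}" shows "AA B T 0 x \<le> VV m x"
proof -
  have "(\<Sum>n. if n = 0 then AA B T 0 x else 0) \<le> VV m x"
    unfolding VV_def
  proof (rule suminf_le)
    fix n show "(if n = 0 then AA B T 0 x else 0) \<le> m^n * AA B T n x"
      using PP_props assms by auto
  qed (use summable_AA[OF assms(2)] in auto)
  moreover have "(\<Sum>n. if n = 0 then AA B T 0 x else 0) = AA B T 0 x"
    using sums_single[of 0 "\<lambda>_. AA B T 0 x"] by (simp add: sums_iff)
  ultimately show ?thesis by simp
qed

lemma VV_nonneg: assumes "0 \<le> m" "x \<in> {0..T}" shows "0 \<le> VV m x"
proof -
  have "0 \<le> AA B T 0 x" using PP_props assms(2) by blast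
  then show ?thesis using VV_ge[OF assms] by linarith
qed

lemma F_cont: "isCont (\<lambda>m. QQ m 0 + VV m 0) m"
proof -
  have z: "(0::real) \<in> {0..T}" using Tpos by auto
  have eq: "(\<lambda>m. QQ m 0 + VV m 0) = (\<lambda>m. \<Sum>n. (PP B T n 0 + AA B T n 0) * m^n)"
  proof
    fix m
    show "QQ m 0 + VV m 0 = (\<Sum>n. (PP B T n 0 + AA B T n 0) * m^n)"
      unfolding QQ_def VV_def using suminf_add[OF summable_PP[OF z, of m] summable_AA[OF z, of m]]
      by (simp add: algebra_simps)
  qed
  have S: "summable (\<lambda>n. (PP B T n 0 + AA B T n 0) * y^n)" for y :: real
  proof (rule summable_comparison_test'[OF summable_expo[of "1 + 2*T" "\<bar>y\<bar>*(2*T^2)"]])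
    fix n
    have "norm ((PP B T n 0 + AA B T n 0) * y^n) \<le> (\<bar>PP B T n 0\<bar> + \<bar>AA B T n 0\<bar>) * \<bar>y\<bar>^n"
      by (simp add: abs_mult power_abs mult_right_mono)
    also have "\<dots> \<le> ((2*T^2)^n / fact n + 2*T*(2*T^2)^n / fact n) * \<bar>y\<bar>^n"
      by (rule mult_right_mono, rule add_mono) (use PP_bnd[OF z] AA_bnd[OF z] in auto)
    also have "\<dots> = (1 + 2*T) * ((\<bar>y\<bar>*(2*T^2))^n / fact n)"
      by (simp add: power_mult_distrib field_simps)
    finally show "norm ((PP B T n 0 + AA B T n 0) * y^n) \<le> (1 + 2*T) * ((\<bar>y\<bar>*(2*T^2))^n / fact n)" .
  qed
  show ?thesis unfolding eq by (rule isCont_powser_converges_everywhere[OF S])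
qed

lemma F_at_4: "QQ 4 0 + VV 4 0 \<le> 0"
proof -
  define h where "h x = VV 4 x + QQ 4 x" for x
  define h' where "h' x = QQ 4 x / (1 - B*x) + 4 * (1 - B*x) * VV 4 x" for x
  have D: "(h has_real_derivative h' x) (at x within {0..T})" if "x \<in> {0..T}" for x
    unfolding h_def h'_def by (intro DERIV_add VV_deriv QQ_deriv that)
  have Z: "h' x > 0" if x: "x \<in> {0..T}" and hx: "h x = 0" for x
  proof -
    have r: "2/3 \<le> 1 - B*x" "1 - B*x \<le> 4/3" "0 < 1 - B*x" using rho_bounds[OF x] by auto
    have q: "QQ 4 x \<le> -1" by (rule QQ_le) (use x in auto)
    have v: "VV 4 x = - QQ 4 x" using hx unfolding h_def by simp
    have e: "h' x = (- QQ 4 x) * (4 * (1 - B*x) - 1 / (1 - B*x))" unfolding h'_def v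
      using r by (simp add: field_simps)
    have pos:  "4 * (1 - B*x) - 1 / (1 - B*x) > 0"
    proof -
      have "1 / (1 - B*x) \<le> 3/2" using r by (simp add: divide_simps)
      then show ?thesis using r rho_aux1 by blast
    qed
    have p: "- QQ 4 x > 0" using q by simp
    show ?thesis unfolding e by (rule mult_pos_pos[OF p pos])
  qed
  have hT: "h T \<le> 0" unfolding h_def using VV_T QQ_le[of 4 T] Tpos by simp
  have "\<forall>x\<in>{0..T}. h x \<le> 0" by (rule barrier_down[OF _ D hT Z]) (use Tpos in auto)
  then have "h 0 \<le> 0" using Tpos by auto
  then show ?thesis unfolding h_def by simp
qed

lemma F_at_quarter: assumes T3: "3 \<le> T" shows "QQ (1/4) 0 + VV (1/4) 0 \<ge> 0"
proof (rule ccontr)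
  assume neg: "\<not> QQ (1/4) 0 + VV (1/4) 0 \<ge> 0"
  define m :: real where "m = 1/4"
  define g where "g x = VV m x / (- QQ m x) - 1" for x
  define g' where "g' x = ((QQ m x / (1 - B*x)) * (- QQ m x) - VV m x * (- (m * (1 - B*x) * VV m x))) / ((- QQ m x) * (- QQ m x))" for x
  have qn: "QQ m x \<le> -1" if "x \<in> {0..T}" for x using QQ_le[of m x] that unfolding m_def by auto
  have vn: "VV m x \<ge> 0" if "x \<in> {0..T}" for x using VV_nonneg[of m x] that unfolding m_def by auto
  have D: "(g has_real_derivative g' x) (at x within {0..T})" if x: "x \<in> {0..T}" for x
  proof -
    have "((\<lambda>x. VV m x / (- QQ m x)) has_real_derivative g' x) (at x within {0..T})"
      unfolding g'_def by (intro DERIV_divide DERIV_minus VV_deriv QQ_deriv x) (use qn[OF x] in auto)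
    then show ?thesis unfolding g_def using DERIV_diff[OF _ DERIV_const] by fastforce
  qed
  have g'_eq: "g' x = m * (1 - B*x) * (VV m x / (- QQ m x))^2 - 1 / (1 - B*x)" if x: "x \<in> {0..T}" for x
  proof -
    have "QQ m x \<noteq> 0" "1 - B*x \<noteq> 0" using qn[OF x] rho_bounds[OF x] by auto
    then show ?thesis unfolding g'_def by (simp add: field_simps power2_eq_square)
  qed
  have Z: "g' x < 0" if x: "x \<in> {0..T}" and gx: "g x = 0" for x
  proof -
    have r: "2/3 \<le> 1 - B*x" "1 - B*x \<le> 4/3" "0 < 1 - B*x" using rho_bounds[OF x] by auto
    have w: "VV m x / (- QQ m x) = 1" using gx unfolding g_def by simp
    have e: "g' x = (1/4) * (1 - B*x) - 1 / (1 - B*x)" using g'_eq[OF x] w unfolding m_def by simp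
    have "1 / (1 - B*x) \<ge> 3/4" using r by (simp add: divide_simps)
    then show ?thesis unfolding e using r rho_aux2 by blast
  qed
  have g0: "g 0 \<le> 0"
  proof -
    have "VV m 0 < - QQ m 0" using neg unfolding m_def by simp
    then have "VV m 0 / (- QQ m 0) < 1" using qn[of 0] Tpos by (simp add: divide_simps)
    then show ?thesis unfolding g_def by simp
  qed
  have gle: "\<forall>x\<in>{0..T}. g x \<le> 0" by (rule barrier_up[OF _ D g0 Z]) (use Tpos in auto)
  have g'le: "g' x \<le> -5/12" if x: "x \<in> {0..T}" for x
  proof -
    have r: "2/3 \<le> 1 - B*x" "1 - B*x \<le> 4/3" "0 < 1 - B*x" using rho_bounds[OF x] by auto
    have w0: "VV m x / (- QQ m x) \<ge> 0" using vn[OF x] qn[OF x] by (simp add: divide_simps)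
    have w1: "VV m x / (- QQ m x) \<le> 1" using gle x unfolding g_def by auto
    have "(VV m x / (- QQ m x))^2 \<le> 1" by (rule power_le_one[OF w0 w1])
    then have "(1 - B*x) * (VV m x / (- QQ m x))^2 \<le> 4/3 * 1"
      by (intro mult_mono) (use r in auto)
    then have a: "m * (1 - B*x) * (VV m x / (- QQ m x))^2 \<le> 1/3"
      unfolding m_def by simp
    have "1 / (1 - B*x) \<ge> 3/4" using r by (simp add: divide_simps)
    then show ?thesis unfolding g'_eq[OF x] using a rho_aux3 by blast
  qed
  define k where "k x = g x + 5/12 * x" for x
  have contg: "continuous_on {0..T} g" using D by (meson DERIV_continuous continuous_on_eq_continuous_within)
  have "k T \<le> k 0"
  proof (rule DERIV_nonpos_imp_decreasing_open[of 0 T k])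
    show "continuous_on {0..T} k" unfolding k_def by (intro continuous_intros contg)
    fix x assume x: "0 < x" "x < T"
    then have xs: "x \<in> {0..T}" by auto
    have "(g has_real_derivative g' x) (at x)" using D[OF xs] at_within_Icc_at[OF x] by simp
    then have "(k has_real_derivative g' x + 5/12) (at x)" unfolding k_def
      by (intro derivative_eq_intros) auto
    then show "\<exists>y. (k has_real_derivative y) (at x) \<and> y \<le> 0" using g'le[OF xs] by auto
  qed (use Tpos in auto)
  moreover have "g T = -1" unfolding g_def using VV_T by simp
  ultimately have "g 0 \<ge> -1 + 5/12 * T" unfolding k_def by simp
  then show False using g0 T3 by linarith
qed

lemma exists_m: assumes "3 \<le> T"
  shows "\<exists>m. 1/4 \<le> m \<and> m \<le> 4 \<and> QQ m 0 + VV m 0 = 0"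
  using IVT2[of "\<lambda>m. QQ m 0 + VV m 0" 4 0 "1/4"] F_at_4 F_at_quarter[OF assms] F_cont by auto

end

lemma cont_bounded_on:
  fixes c :: "real \<Rightarrow> real"
  assumes "continuous_on {a..b} c"
  obtains C where "\<And>x. x \<in> {a..b} \<Longrightarrow> \<bar>c x\<bar> \<le> C"
proof -
  have "bounded (c ` {a..b})" by (rule compact_imp_bounded, rule compact_continuous_image[OF assms]) simp
  then obtain C where "\<forall>y\<in>c ` {a..b}. norm y \<le> C" by (auto simp: bounded_iff)
  then have "\<And>x. x \<in> {a..b} \<Longrightarrow> \<bar>c x\<bar> \<le> C" by auto
  then show ?thesis by (rule that)
qed

lemma set_borel_measurable_cont:
  fixes c :: "real \<Rightarrow> real"
  assumes "continuous_on {a..b} c"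
  shows "(\<lambda>x. indicator {a..b} x * c x) \<in> borel_measurable lborel"
  using borel_measurable_continuous_on_indicator[OF _ assms] by simp

lemma cont_mult_set_integrable:
  fixes c w' :: "real \<Rightarrow> real"
  assumes c: "continuous_on {a..b} c" and w: "set_integrable lborel {a..b} w'"
  shows "set_integrable lborel {a..b} (\<lambda>x. c x * w' x)"
proof -
  obtain C where C: "\<And>x. x \<in> {a..b} \<Longrightarrow> \<bar>c x\<bar> \<le> C" using cont_bounded_on[OF c] by blast
  have m1: "(\<lambda>x. indicator {a..b} x * c x) \<in> borel_measurable lborel" by (rule set_borel_measurable_cont[OF c])
  have m2: "(\<lambda>x. indicator {a..b} x * w' x) \<in> borel_measurable lborel"
    using w unfolding set_integrable_def by (simp add: borel_measurable_integrable)
  have eq: "(\<lambda>x. indicator {a..b} x *\<^sub>R (c x * w' x)) = (\<lambda>x. (indicator {a..b} x * c x) * (indicator {a..b} x * w' x))"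
    by (auto simp: indicator_def)
  have meas: "set_borel_measurable lborel {a..b} (\<lambda>x. c x * w' x)"
    unfolding set_borel_measurable_def eq using m1 m2 by measurable
  show ?thesis
  proof (rule set_integrable_bound[OF set_integrable_mult_right[OF w, of C] meas])
    show "AE x in lborel. x \<in> {a..b} \<longrightarrow> norm (c x * w' x) \<le> norm (C * w' x)"
    proof (rule AE_I2, rule impI)
      fix x assume x: "x \<in> {a..b}"
      have "\<bar>c x\<bar> * \<bar>w' x\<bar> \<le> C * \<bar>w' x\<bar>" by (rule mult_right_mono[OF C[OF x]]) simp
      also have "\<dots> \<le> \<bar>C\<bar> * \<bar>w' x\<bar>" by (rule mult_right_mono) auto
      finally show "norm (c x * w' x) \<le> norm (C * w' x)" by (simp add: abs_mult)
    qed
  qed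
qed


lemma fubini_tri:
  fixes g' w' :: "real \<Rightarrow> real"
  assumes b: "0 \<le> b" and gc: "continuous_on {0..b} g'" and w: "set_integrable lborel {0..b} w'"
  shows "(LINT s:{0..b}|lborel. w' s * (LINT t:{s..b}|lborel. g' t))
       = (LINT t:{0..b}|lborel. g' t * (LINT s:{0..t}|lborel. w' s))"
proof -
  define W where "W s = indicator {0..b} s * w' s" for s
  define G where "G t = indicator {0..b} t * g' t" for t
  have mW[measurable]: "W \<in> borel_measurable lborel"
    using w unfolding set_integrable_def W_def by (simp add: borel_measurable_integrable)
  have mG[measurable]: "G \<in> borel_measurable lborel"
    unfolding G_def by (rule set_borel_measurable_cont[OF gc])
  have iW: "integrable lborel W" using w unfolding set_integrable_def W_def by simp
  have iG: "integrable lborel G" using borel_integrable_atLeastAtMost'[OF gc]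
    unfolding set_integrable_def G_def by simp
  have H: "integrable (lborel \<Otimes>\<^sub>M lborel) (\<lambda>(s,t). W s * G t)"
  proof (rule lborel_pair.Fubini_integrable)
    show "(\<lambda>(s,t). W s * G t) \<in> borel_measurable (lborel \<Otimes>\<^sub>M lborel)" by measurable
    have "(\<lambda>s. \<integral>t. norm ((\<lambda>(s,t). W s * G t) (s, t)) \<partial>lborel) = (\<lambda>s. \<bar>W s\<bar> * (\<integral>t. \<bar>G t\<bar> \<partial>lborel))"
      by (simp add: abs_mult)
    then show "integrable lborel (\<lambda>s. \<integral>t. norm ((\<lambda>(s,t). W s * G t) (s, t)) \<partial>lborel)"
      using integrable_mult_left[OF integrable_abs[OF iW]] by simp
    show "AE s in lborel. integrable lborel (\<lambda>t. (\<lambda>(s,t). W s * G t) (s, t))"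
      using integrable_mult_right[OF iG] by simp
  qed
  define f where "f s t = (if s \<le> t then W s * G t else 0)" for s t
  have F: "integrable (lborel \<Otimes>\<^sub>M lborel) (case_prod f)"
  proof (rule Bochner_Integration.integrable_bound[OF H])
    show "case_prod f \<in> borel_measurable (lborel \<Otimes>\<^sub>M lborel)" unfolding f_def by measurable
    show "AE x in lborel \<Otimes>\<^sub>M lborel. norm (case_prod f x) \<le> norm ((\<lambda>(s,t). W s * G t) x)"
      by (rule AE_I2) (auto simp: f_def)
  qed
  have FU: "(\<integral>t. (\<integral>s. f s t \<partial>lborel) \<partial>lborel) = (\<integral>s. (\<integral>t. f s t \<partial>lborel) \<partial>lborel)"
    by (rule lborel_pair.Fubini_integral[OF F])
  have in1: "(\<integral>t. f s t \<partial>lborel) = indicator {0..b} s * (w' s * (LINT t:{s..b}|lborel. g' t))" for s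
  proof (cases "s \<in> {0..b}")
    case True
    have "(\<lambda>t. f s t) = (\<lambda>t. W s * (indicator {s..b} t * g' t))"
      using True by (auto simp: f_def G_def indicator_def)
    then show ?thesis using True by (simp add: W_def set_lebesgue_integral_def)
  next
    case False
    then have "(\<lambda>t. f s t) = (\<lambda>t. 0)" by (auto simp: f_def W_def)
    then show ?thesis using False by simp
  qed
  have in2: "(\<integral>s. f s t \<partial>lborel) = indicator {0..b} t * (g' t * (LINT s:{0..t}|lborel. w' s))" for t
  proof (cases "t \<in> {0..b}")
    case True
    have "(\<lambda>s. f s t) = (\<lambda>s. G t * (indicator {0..t} s * w' s))"
      using True by (auto simp: f_def W_def indicator_def)
    then show ?thesis using True by (simp add: G_def set_lebesgue_integral_def)
  next
    case False
    then have "(\<lambda>s. f s t) = (\<lambda>s. 0)" by (auto simp: f_def G_def)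
    then show ?thesis using False by simp
  qed
  show ?thesis using FU unfolding in1 in2 by (simp add: set_lebesgue_integral_def)
qed


lemma interval_integral_Icc0:
  fixes f :: "real \<Rightarrow> real"
  shows "0 \<le> x \<Longrightarrow> (LBINT t=0..x. f t) = (LINT t:{0..x}|lborel. f t)"
  using interval_integral_Icc[of 0 x f] by (simp add: zero_ereal_def)

lemma interval_integral_eq_integral0:
  fixes f :: "real \<Rightarrow> real"
  shows "0 \<le> x \<Longrightarrow> set_integrable lborel {0..x} f \<Longrightarrow> (LBINT t=0..x. f t) = integral {0..x} f"
  using interval_integral_eq_integral[of 0 x f] by (simp add: zero_ereal_def)

lemma ac_continuous:
  fixes w w' :: "real \<Rightarrow> real"
  assumes b: "0 \<le> b" and wi: "set_integrable lborel {0..b} w'"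
    and wf: "\<And>x. x \<in> {0..b} \<Longrightarrow> w x = w 0 + (LBINT t=0..x. w' t)"
  shows "continuous_on {0..b} w"
proof -
  have hk: "w' integrable_on {0..b}" using set_borel_integral_eq_integral(1)[OF wi] .
  have eq: "w x = w 0 + integral {0..x} w'" if x: "x \<in> {0..b}" for x
  proof -
    have "set_integrable lborel {0..x} w'" by (rule set_integrable_subset[OF wi]) (use x in auto)
    then have "(LBINT t=0..x. w' t) = integral {0..x} w'"
      using x by (intro interval_integral_eq_integral0) auto
    then show ?thesis using wf[OF x] by simp
  qed
  have "continuous_on {0..b} (\<lambda>x. w 0 + integral {0..x} w')"
    by (intro continuous_intros indefinite_integral_continuous_1 hk)
  then show ?thesis using eq by (metis (no_types, lifting) continuous_on_cong)
qed

lemma ftc_set: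
  fixes g g' :: "real \<Rightarrow> real"
  assumes sb: "s \<le> b" and sub: "{s..b} \<subseteq> S"
    and gd: "\<And>x. x \<in> S \<Longrightarrow> (g has_real_derivative g' x) (at x within S)"
    and gc: "continuous_on {s..b} g'"
  shows "(LINT t:{s..b}|lborel. g' t) = g b - g s"
proof -
  have "(LBINT t=s..b. g' t) = g b - g s"
  proof (rule interval_integral_FTC_finite)
    show "continuous_on {min s b..max s b} g'" using gc sb by simp
    fix x assume "min s b \<le> x" "x \<le> max s b"
    then have x: "x \<in> {s..b}" using sb by auto
    have "(g has_real_derivative g' x) (at x within {s..b})"
      by (rule DERIV_subset[OF gd sub]) (use x sub in auto)
    then show "(g has_vector_derivative g' x) (at x within {min s b..max s b})"
      using sb by (simp add: has_real_derivative_iff_has_vector_derivative)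
  qed
  moreover have "(LBINT t=s..b. g' t) = (LINT t:{s..b}|lborel. g' t)" by (rule interval_integral_Icc[OF sb])
  ultimately show ?thesis by simp
qed

lemma ibp:
  fixes g g' w w' :: "real \<Rightarrow> real"
  assumes b: "0 \<le> b"
    and gd: "\<And>x. x \<in> {0..b} \<Longrightarrow> (g has_real_derivative g' x) (at x within {0..b})"
    and gc: "continuous_on {0..b} g'"
    and wi: "set_integrable lborel {0..b} w'"
    and wf: "\<And>x. x \<in> {0..b} \<Longrightarrow> w x = w 0 + (LBINT t=0..x. w' t)"
  shows "(LBINT x=0..b. g x * w' x) = g b * w b - g 0 * w 0 - (LBINT x=0..b. g' x * w x)"
proof -
  have contg: "continuous_on {0..b} g"
    using gd by (meson DERIV_continuous continuous_on_eq_continuous_within)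
  have contw: "continuous_on {0..b} w" by (rule ac_continuous[OF b wi wf])
  have X: "(LINT t:{s..b}|lborel. g' t) = g b - g s" if s: "s \<in> {0..b}" for s
    by (rule ftc_set[OF _ _ gd]) (use s in \<open>auto intro: continuous_on_subset[OF gc]\<close>)
  have Y: "(LINT t:{0..x}|lborel. w' t) = w x - w 0" if x: "x \<in> {0..b}" for x
    using wf[OF x] interval_integral_Icc0[of x w'] x by simp
  have fub: "(LINT s:{0..b}|lborel. w' s * (g b - g s)) = (LINT t:{0..b}|lborel. g' t * (w t - w 0))"
  proof -
    have "(LINT s:{0..b}|lborel. w' s * (g b - g s)) = (LINT s:{0..b}|lborel. w' s * (LINT t:{s..b}|lborel. g' t))"
      by (rule set_lebesgue_integral_cong) (auto simp: X)
    also have "\<dots> = (LINT t:{0..b}|lborel. g' t * (LINT s:{0..t}|lborel. w' s))"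
      by (rule fubini_tri[OF b gc wi])
    also have "\<dots> = (LINT t:{0..b}|lborel. g' t * (w t - w 0))"
      by (rule set_lebesgue_integral_cong) (auto simp: Y)
    finally show ?thesis .
  qed
  have i1: "set_integrable lborel {0..b} (\<lambda>x. g x * w' x)" by (rule cont_mult_set_integrable[OF contg wi])
  have i2: "set_integrable lborel {0..b} (\<lambda>x. g b * w' x)" using wi by simp
  have i3: "set_integrable lborel {0..b} (\<lambda>x. g' x * w x)"
    by (rule borel_integrable_atLeastAtMost') (intro continuous_intros gc contw)
  have i4: "set_integrable lborel {0..b} (\<lambda>x. g' x * w 0)"
    by (rule borel_integrable_atLeastAtMost') (intro continuous_intros gc)
  have e1: "(LINT s:{0..b}|lborel. w' s * (g b - g s)) = (LINT s:{0..b}|lborel. g b * w' s) - (LINT s:{0..b}|lborel. g s * w' s)"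
  proof -
    have "(LINT s:{0..b}|lborel. w' s * (g b - g s)) = (LINT s:{0..b}|lborel. g b * w' s - g s * w' s)"
      by (rule set_lebesgue_integral_cong) (auto simp: algebra_simps)
    then show ?thesis using set_integral_diff(2)[OF i2 i1] by simp
  qed
  have e2: "(LINT t:{0..b}|lborel. g' t * (w t - w 0)) = (LINT t:{0..b}|lborel. g' t * w t) - (LINT t:{0..b}|lborel. g' t * w 0)"
  proof -
    have "(LINT t:{0..b}|lborel. g' t * (w t - w 0)) = (LINT t:{0..b}|lborel. g' t * w t - g' t * w 0)"
      by (rule set_lebesgue_integral_cong) (auto simp: algebra_simps)
    then show ?thesis using set_integral_diff(2)[OF i3 i4] by simp
  qed
  have e3: "(LINT t:{0..b}|lborel. g' t * w 0) = w 0 * (g b - g 0)"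
    using X[of 0] b by (simp add: mult.commute)
  have e4: "(LINT s:{0..b}|lborel. g b * w' s) = g b * (w b - w 0)"
    using Y[of b] b by simp
  have "(LBINT x=0..b. g x * w' x) = (LINT x:{0..b}|lborel. g x * w' x)" by (rule interval_integral_Icc0[OF b])
  moreover have "(LBINT x=0..b. g' x * w x) = (LINT x:{0..b}|lborel. g' x * w x)" by (rule interval_integral_Icc0[OF b])
  ultimately show ?thesis using fub e1 e2 e3 e4 by (simp add: algebra_simps)
qed

context bt begin

lemma QQ_cont: "continuous_on {0..T} (QQ m)"
  using QQ_deriv by (meson DERIV_continuous continuous_on_eq_continuous_within)

lemma VV_cont: "continuous_on {0..T} (VV m)"
  using VV_deriv by (meson DERIV_continuous continuous_on_eq_continuous_within)

lemma rho_nz: "x \<in> {0..T} \<Longrightarrow> 1 - B*x \<noteq> 0"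
  using rho_bounds(3)[of x] by linarith

lemma AA0_lower: assumes x: "x \<in> {0..T}" shows "3/4 * (T - x) \<le> AA B T 0 x"
proof -
  have sub: "{x..T} \<subseteq> {0..T}" using x by auto
  have c: "continuous_on {x..T} (\<lambda>y. (- PP B T 0 y) / (1 - B*y))"
    by (intro continuous_intros continuous_on_subset[OF PP_props[THEN conjunct1] sub]) (use rho_nz sub in blast)
  have "integral {x..T} (\<lambda>y. 3/4) \<le> integral {x..T} (\<lambda>y. (- PP B T 0 y) / (1 - B*y))"
  proof (rule integral_le)
    show "(\<lambda>y. (- PP B T 0 y) / (1 - B*y)) integrable_on {x..T}" by (rule integrable_continuous_interval[OF c])
    fix y assume y: "y \<in> {x..T}"
    then have r: "1 - B*y \<le> 4/3" "0 < 1 - B*y" using rho_bounds[of y] sub by auto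
    show "3/4 \<le> (- PP B T 0 y) / (1 - B*y)" using r by (simp add: divide_simps)
  qed (rule integrable_const_ivl)
  then show ?thesis using x by (simp add: AA_def)
qed

lemma exists_neg_eigenpair:
  assumes T3: "3 \<le> T"
  shows "\<exists>mu v. mu \<le> -1/4 \<and> is_eigenpair B T mu v"
proof -
  obtain m where m: "1/4 \<le> m" "m \<le> 4" "QQ m 0 + VV m 0 = 0" using exists_m[OF T3] by blast
  define v where "v = VV m"
  define v' where "v' x = QQ m x / (1 - B*x)" for x
  have T0: "0 \<le> T" using Tpos by simp
  have cv': "continuous_on {0..T} v'" unfolding v'_def
    by (intro continuous_intros QQ_cont) (use rho_nz in blast)
  have vd: "(v has_real_derivative v' x) (at x within {0..T})" if "x \<in> {0..T}" for x
    unfolding v_def v'_def by (rule VV_deriv[OF that])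
  have H1: "H1_with_deriv T v v'"
    unfolding H1_with_deriv_def
  proof (intro conjI ballI)
    show "set_integrable lborel {0..T} v'" by (rule borel_integrable_atLeastAtMost'[OF cv'])
    show "set_integrable lborel {0..T} (\<lambda>x. (v' x)\<^sup>2)"
      by (rule borel_integrable_atLeastAtMost') (intro continuous_intros cv')
    fix x assume x: "x \<in> {0..T}"
    have "(LINT t:{0..x}|lborel. v' t) = v x - v 0"
      by (rule ftc_set[of 0 x "{0..T}" v v']) (use x vd in \<open>auto intro: continuous_on_subset[OF cv']\<close>)
    then show "v x = v 0 + (LBINT t=0..x. v' t)" using interval_integral_Icc0[of x v'] x by simp
  qed
  have FD: "form_dom T v v'" unfolding form_dom_def using H1 VV_T v_def by simp
  have pos: "(LBINT x=0..T. (v x)\<^sup>2 * (1 - B * x)) > 0"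
  proof -
    have i1: "set_integrable lborel {0..T} (\<lambda>x. (v x)\<^sup>2 * (1 - B * x))"
      unfolding v_def by (rule borel_integrable_atLeastAtMost') (intro continuous_intros VV_cont)
    have i2: "set_integrable lborel {0..T} (\<lambda>x. 3/8 * (T - x)^2)"
      by (rule borel_integrable_atLeastAtMost') (intro continuous_intros)
    have "(LINT x:{0..T}|lborel. 3/8 * (T - x)^2) \<le> (LINT x:{0..T}|lborel. (v x)\<^sup>2 * (1 - B * x))"
    proof (rule set_integral_mono[OF i2 i1])
      fix x assume x: "x \<in> {0..T}"
      have r: "2/3 \<le> 1 - B*x" using rho_bounds[OF x] by auto
      have a: "3/4 * (T - x) \<le> v x" using AA0_lower[OF x] VV_ge[of m x] m x unfolding v_def by auto
      have "(3/4 * (T - x))^2 \<le> (v x)^2" by (rule power_mono[OF a]) (use x in auto)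
      then have "(3/4 * (T - x))^2 * (2/3) \<le> (v x)^2 * (1 - B*x)"
        by (rule mult_mono) (use r in auto)
      moreover have "(3/4 * (T - x))^2 * (2/3) = 3/8 * (T - x)^2" by (simp add: power2_eq_square field_simps)
      ultimately show "3/8 * (T - x)^2 \<le> (v x)\<^sup>2 * (1 - B * x)" by linarith
    qed
    moreover have "(LINT x:{0..T}|lborel. 3/8 * (T - x)^2) = T^3/8"
    proof -
      define P :: "real \<Rightarrow> real" where "P z = - ((T - z)^3) / 8" for z
      have "(LINT x:{0..T}|lborel. 3/8 * (T - x)^2) = P T - P 0"
      proof (rule ftc_set[of 0 T UNIV])
        fix y :: real
        have d1: "((\<lambda>z. T - z) has_real_derivative -1) (at y)"
          using DERIV_diff[OF DERIV_const DERIV_ident, of T y] by simp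
        have d2: "((\<lambda>z. (T - z)^3) has_real_derivative of_nat 3 * ((-1) * (T - y)^(3 - Suc 0))) (at y)"
          by (rule DERIV_power[OF d1])
        have d3: "(P has_real_derivative - (of_nat 3 * ((-1) * (T - y)^(3 - Suc 0))) / 8) (at y)"
          unfolding P_def by (rule DERIV_cdivide[OF DERIV_minus[OF d2]])
        have e: "- (of_nat 3 * ((-1) * (T - y)^(3 - Suc 0))) / 8 = 3/8 * (T - y)^2"
          by simp
        show "(P has_real_derivative 3/8 * (T - y)^2) (at y within UNIV)" using d3 unfolding e by simp
      qed (use T0 in \<open>auto intro!: continuous_intros\<close>)
      then show ?thesis by (simp add: P_def)
    qed
    ultimately have h1: "(LINT x:{0..T}|lborel. (v x)\<^sup>2 * (1 - B * x)) \<ge> T^3/8" by simp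
    have h2: "T^3/8 > 0" using Tpos by (simp add: zero_less_power)
    have h3: "(LINT x:{0..T}|lborel. (v x)\<^sup>2 * (1 - B * x)) > 0" using h1 h2 by linarith
    have h4: "(LBINT x=0..T. (v x)\<^sup>2 * (1 - B * x)) = (LINT x:{0..T}|lborel. (v x)\<^sup>2 * (1 - B * x))"
      by (rule interval_integral_Icc0[OF T0])
    show ?thesis unfolding h4 by (rule h3)
  qed
  have weak: "(LBINT x=0..T. v' x * w' x * (1 - B * x)) - v 0 * w 0
             = (-m) * (LBINT x=0..T. v x * w x * (1 - B * x))" if wd: "form_dom T w w'" for w w'
  proof -
    have wi: "set_integrable lborel {0..T} w'" and wf: "\<And>x. x \<in> {0..T} \<Longrightarrow> w x = w 0 + (LBINT t=0..x. w' t)"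
      and wT: "w T = 0" using wd unfolding form_dom_def H1_with_deriv_def by blast+
    have gc: "continuous_on {0..T} (\<lambda>x. m * (1 - B*x) * VV m x)" by (intro continuous_intros VV_cont)
    have I: "(LBINT x=0..T. QQ m x * w' x) = QQ m T * w T - QQ m 0 * w 0 - (LBINT x=0..T. m * (1 - B*x) * VV m x * w x)"
      by (rule ibp[OF T0 QQ_deriv gc wi wf])
    have c1: "(LBINT x=0..T. v' x * w' x * (1 - B * x)) = (LBINT x=0..T. QQ m x * w' x)"
    proof -
      have "(LINT x:{0..T}|lborel. v' x * w' x * (1 - B * x)) = (LINT x:{0..T}|lborel. QQ m x * w' x)"
        by (rule set_lebesgue_integral_cong) (use rho_nz in \<open>auto simp: v'_def\<close>)
      then show ?thesis using interval_integral_Icc0[OF T0] by simp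
    qed
    have c2: "(LBINT x=0..T. m * (1 - B*x) * VV m x * w x) = m * (LBINT x=0..T. v x * w x * (1 - B * x))"
    proof -
      have "(LINT x:{0..T}|lborel. m * (1 - B*x) * VV m x * w x) = (LINT x:{0..T}|lborel. m * (v x * w x * (1 - B * x)))"
        by (rule set_lebesgue_integral_cong) (auto simp: v_def algebra_simps)
      then show ?thesis using interval_integral_Icc0[OF T0] by simp
    qed
    have q0: "QQ m 0 = - v 0" using m(3) unfolding v_def by simp
    show ?thesis using I unfolding c1 c2 q0 wT by simp
  qed
  have "is_eigenpair B T (-m) v"
    unfolding is_eigenpair_def using FD pos weak by (intro exI[of _ v']) auto
  then show ?thesis using m by (intro exI[of _ "-m"] exI[of _ v]) auto
qed

end

lemma set_int_mono_sub:
  fixes f :: "real \<Rightarrow> real"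
  assumes fi: "set_integrable lborel B f" and AB: "A \<subseteq> B" and As: "A \<in> sets lborel"
    and nn: "\<And>x. x \<in> B \<Longrightarrow> 0 \<le> f x"
  shows "(LINT x:A|lborel. f x) \<le> (LINT x:B|lborel. f x)"
proof -
  have fA: "set_integrable lborel A f" by (rule set_integrable_subset[OF fi As AB])
  have eq: "(\<lambda>x. indicator B x *\<^sub>R (indicator A x * f x)) = (\<lambda>x. indicator A x *\<^sub>R f x)"
    using AB by (auto simp: indicator_def fun_eq_iff)
  have i2: "set_integrable lborel B (\<lambda>x. indicator A x * f x)"
    using fA unfolding set_integrable_def eq .
  have "(LINT x:A|lborel. f x) = (LINT x:B|lborel. indicator A x * f x)"
    unfolding set_lebesgue_integral_def eq ..
  also have "\<dots> \<le> (LINT x:B|lborel. f x)"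
    by (rule set_integral_mono[OF i2 fi]) (use nn in \<open>auto simp: indicator_def\<close>)
  finally show ?thesis .
qed

lemma set_int_nonneg:
  fixes f :: "real \<Rightarrow> real"
  assumes fi: "set_integrable lborel A f" and nn: "\<And>x. x \<in> A \<Longrightarrow> 0 \<le> f x"
  shows "0 \<le> (LINT x:A|lborel. f x)"
proof -
  have "(LINT x:A|lborel. (0::real)) \<le> (LINT x:A|lborel. f x)"
    by (rule set_integral_mono[OF _ fi]) (use nn in \<open>auto simp: set_integrable_def\<close>)
  then show ?thesis by (simp add: set_lebesgue_integral_def)
qed

lemma set_int_const:
  assumes "0 \<le> d"
  shows "(LINT x:{0..d}|lborel. (c::real)) = c * d"
proof -
  have "(LINT x:{0..d}|lborel. c) = (\<lambda>x. c * x) d - (\<lambda>x. c * x) 0"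
    by (rule ftc_set[of 0 d UNIV]) (use assms in \<open>auto intro!: derivative_eq_intros continuous_intros\<close>)
  then show ?thesis by simp
qed


lemma amgm_abs:
  fixes a t :: real
  assumes t: "t > 0"
  shows "\<bar>a\<bar> \<le> (t * a^2 + 1/t) / 2"
proof -
  have "0 \<le> (t * \<bar>a\<bar> - 1)^2" by simp
  also have "(t * \<bar>a\<bar> - 1)^2 = t^2 * a^2 - 2 * t * \<bar>a\<bar> + 1"
    by (simp add: power2_eq_square algebra_simps)
  finally have h: "2 * t * \<bar>a\<bar> \<le> t^2 * a^2 + 1" by linarith
  have e: "(t * a^2 + 1/t) / 2 = (t^2 * a^2 + 1) / (2 * t)" using t by (simp add: field_simps power2_eq_square)
  have l: "\<bar>a\<bar> \<le> (t^2 * a^2 + 1) / (2 * t)" using h t by (simp add: field_simps)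
  show ?thesis using e l by linarith
qed


context bt begin

lemma u0_bound:
  assumes T3: "3 \<le> T" and FD: "form_dom T u u'"
    and nrm: "(LBINT x=0..T. (u x)\<^sup>2 * (1 - B*x)) = 1"
    and grd: "(LBINT x=0..T. u' x * u' x * (1 - B*x)) \<le> (u 0)\<^sup>2"
  shows "(u 0)\<^sup>2 \<le> 100"
proof -
  have ui: "set_integrable lborel {0..T} u'" and ui2: "set_integrable lborel {0..T} (\<lambda>x. (u' x)\<^sup>2)"
    and uf: "\<And>x. x \<in> {0..T} \<Longrightarrow> u x = u 0 + (LBINT t=0..x. u' t)"
    using FD unfolding form_dom_def H1_with_deriv_def by blast+
  have T0: "0 \<le> T" using Tpos by simp
  have contu: "continuous_on {0..T} u" by (rule ac_continuous[OF T0 ui uf])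
  define d :: real where "d = 1/6"
  have d: "0 < d" "d \<le> T" using T3 unfolding d_def by auto
  have sub: "{0..d} \<subseteq> {0..T}" using d by auto
  have contud: "continuous_on {0..d} u" by (rule continuous_on_subset[OF contu sub])
  define A where "A = (LINT x:{0..d}|lborel. (u x)\<^sup>2)"
  define D where "D = (LINT x:{0..d}|lborel. (u' x)\<^sup>2)"
  have iuuT: "set_integrable lborel {0..T} (\<lambda>x. (u x)\<^sup>2)"
    by (rule borel_integrable_atLeastAtMost') (intro continuous_intros contu)
  have iuuR: "set_integrable lborel {0..T} (\<lambda>x. 3/2 * ((u x)\<^sup>2 * (1 - B*x)))"
    by (rule borel_integrable_atLeastAtMost') (intro continuous_intros contu)
  have A: "A \<le> 3/2"
  proof -
    have "A \<le> (LINT x:{0..T}|lborel. (u x)\<^sup>2)"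
      unfolding A_def by (rule set_int_mono_sub[OF iuuT sub]) auto
    also have "\<dots> \<le> (LINT x:{0..T}|lborel. 3/2 * ((u x)\<^sup>2 * (1 - B*x)))"
    proof (rule set_integral_mono[OF iuuT iuuR])
      fix x assume x: "x \<in> {0..T}"
      have r: "2/3 \<le> 1 - B*x" using rho_bounds[OF x] by simp
      have "(u x)\<^sup>2 * (2/3) \<le> (u x)\<^sup>2 * (1 - B*x)" by (rule mult_left_mono[OF r]) simp
      then show "(u x)\<^sup>2 \<le> 3/2 * ((u x)\<^sup>2 * (1 - B*x))" by simp
    qed
    also have "\<dots> = 3/2" using nrm interval_integral_Icc0[OF T0, of "\<lambda>x. (u x)\<^sup>2 * (1 - B*x)"] by simp
    finally show ?thesis .
  qed
  have iu'R: "set_integrable lborel {0..T} (\<lambda>x. (1 - B*x) * (u' x)\<^sup>2)"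
    by (rule cont_mult_set_integrable[OF _ ui2]) (intro continuous_intros)
  have iu'R2: "set_integrable lborel {0..T} (\<lambda>x. 3/2 * ((1 - B*x) * (u' x)\<^sup>2))"
    using iu'R by simp
  have Dle: "D \<le> 3/2 * (u 0)\<^sup>2"
  proof -
    have "D \<le> (LINT x:{0..T}|lborel. (u' x)\<^sup>2)"
      unfolding D_def by (rule set_int_mono_sub[OF ui2 sub]) auto
    also have "\<dots> \<le> (LINT x:{0..T}|lborel. 3/2 * ((1 - B*x) * (u' x)\<^sup>2))"
    proof (rule set_integral_mono[OF ui2 iu'R2])
      fix x assume x: "x \<in> {0..T}"
      have r: "2/3 \<le> 1 - B*x" using rho_bounds[OF x] by simp
      have "(2/3) * (u' x)\<^sup>2 \<le> (1 - B*x) * (u' x)\<^sup>2" by (rule mult_right_mono[OF r]) simp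
      then show "(u' x)\<^sup>2 \<le> 3/2 * ((1 - B*x) * (u' x)\<^sup>2)" by simp
    qed
    also have "\<dots> = 3/2 * (LINT x:{0..T}|lborel. u' x * u' x * (1 - B*x))"
    proof -
      have "(LINT x:{0..T}|lborel. (1 - B*x) * (u' x)\<^sup>2) = (LINT x:{0..T}|lborel. u' x * u' x * (1 - B*x))"
        by (rule set_lebesgue_integral_cong) (auto simp: power2_eq_square)
      then show ?thesis by simp
    qed
    also have "\<dots> \<le> 3/2 * (u 0)\<^sup>2"
      using grd interval_integral_Icc0[OF T0, of "\<lambda>x. u' x * u' x * (1 - B*x)"] by simp
    finally show ?thesis .
  qed
  define g where "g x = (d - x) / d" for x
  have gd: "(g has_real_derivative -1/d) (at x within {0..d})" for x
    unfolding g_def using d by (auto intro!: derivative_eq_intros)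
  have uid: "set_integrable lborel {0..d} u'" by (rule set_integrable_subset[OF ui _ sub]) auto
  have ufd: "\<And>x. x \<in> {0..d} \<Longrightarrow> u x = u 0 + (LBINT t=0..x. u' t)" using uf sub by blast
  have I: "(LBINT x=0..d. g x * u' x) = g d * u d - g 0 * u 0 - (LBINT x=0..d. (-1/d) * u x)"
    by (rule ibp[OF _ gd _ uid ufd]) (use d in auto)
  have iud: "set_integrable lborel {0..d} u" by (rule borel_integrable_atLeastAtMost'[OF contud])
  have contg: "continuous_on {0..d} g" unfolding g_def by (intro continuous_intros) (use d in auto)
  have igu: "set_integrable lborel {0..d} (\<lambda>x. g x * u' x)" by (rule cont_mult_set_integrable[OF contg uid])
  define F where "F x = 1/d * u x - g x * u' x" for x
  have iF: "set_integrable lborel {0..d} F"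
    unfolding F_def by (rule set_integral_diff(1)) (use iud igu in simp_all)
  have u0F: "u 0 = (LINT x:{0..d}|lborel. F x)"
  proof -
    have "(LINT x:{0..d}|lborel. F x) = (LINT x:{0..d}|lborel. 1/d * u x) - (LINT x:{0..d}|lborel. g x * u' x)"
      unfolding F_def by (rule set_integral_diff(2)) (use iud igu in simp_all)
    moreover have "(LBINT x=0..d. g x * u' x) = (LINT x:{0..d}|lborel. g x * u' x)"
      by (rule interval_integral_Icc0) (use d in simp)
    moreover have "(LBINT x=0..d. (-1/d) * u x) = (LINT x:{0..d}|lborel. (-1/d) * u x)"
      by (rule interval_integral_Icc0) (use d in simp)
    moreover have "(LINT x:{0..d}|lborel. (-1/d) * u x) = (-1/d) * (LINT x:{0..d}|lborel. u x)"
      by (rule set_integral_mult_right)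
    moreover have "g d = 0" "g 0 = 1" unfolding g_def using d by auto
    ultimately show ?thesis using I by simp
  qed
  have key: "\<bar>u 0\<bar> \<le> (A + d) / (2*d) + (q * D + d / q) / 2" if q: "q > 0" for q
  proof -
    define R where "R x = 1/(2*d) * (u x)\<^sup>2 + q/2 * (u' x)\<^sup>2 + (1/(2*d) + 1/(2*q))" for x
    have iuud: "set_integrable lborel {0..d} (\<lambda>x. (u x)\<^sup>2)"
      by (rule borel_integrable_atLeastAtMost') (intro continuous_intros contud)
    have iu'2d: "set_integrable lborel {0..d} (\<lambda>x. (u' x)\<^sup>2)" by (rule set_integrable_subset[OF ui2 _ sub]) auto
    have ic: "set_integrable lborel {0..d} (\<lambda>x. (1/(2*d) + 1/(2*q)))"
      by (rule borel_integrable_atLeastAtMost') (intro continuous_intros)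
    have i1: "set_integrable lborel {0..d} (\<lambda>x. 1/(2*d) * (u x)\<^sup>2)" using iuud by simp
    have i2: "set_integrable lborel {0..d} (\<lambda>x. q/2 * (u' x)\<^sup>2)" using iu'2d by simp
    have i12: "set_integrable lborel {0..d} (\<lambda>x. 1/(2*d) * (u x)\<^sup>2 + q/2 * (u' x)\<^sup>2)"
      by (rule set_integral_add(1)[OF i1 i2])
    have iR: "set_integrable lborel {0..d} R" unfolding R_def by (rule set_integral_add(1)[OF i12 ic])
    have LR: "(LINT x:{0..d}|lborel. R x) = (A + d) / (2*d) + (q * D + d / q) / 2"
    proof -
      have "(LINT x:{0..d}|lborel. R x) = (LINT x:{0..d}|lborel. 1/(2*d) * (u x)\<^sup>2 + q/2 * (u' x)\<^sup>2)
          + (LINT x:{0..d}|lborel. (1/(2*d) + 1/(2*q)))"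
        unfolding R_def by (rule set_integral_add(2)[OF i12 ic])
      also have "(LINT x:{0..d}|lborel. 1/(2*d) * (u x)\<^sup>2 + q/2 * (u' x)\<^sup>2)
          = (LINT x:{0..d}|lborel. 1/(2*d) * (u x)\<^sup>2) + (LINT x:{0..d}|lborel. q/2 * (u' x)\<^sup>2)"
        by (rule set_integral_add(2)[OF i1 i2])
      also have "(LINT x:{0..d}|lborel. (1/(2*d) + 1/(2*q))) = (1/(2*d) + 1/(2*q)) * d"
        by (rule set_int_const) (use d in simp)
      finally have "(LINT x:{0..d}|lborel. R x) = 1/(2*d) * A + q/2 * D + (1/(2*d) + 1/(2*q)) * d"
        unfolding A_def D_def by simp
      also have "\<dots> = (A + d) / (2*d) + (q * D + d / q) / 2" using d q by (simp add: field_simps)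
      finally show ?thesis .
    qed
    have pw: "\<bar>F x\<bar> \<le> R x" if x: "x \<in> {0..d}" for x
    proof -
      have g1: "\<bar>g x\<bar> \<le> 1" using x d unfolding g_def by (auto simp: abs_le_iff divide_simps)
      have a1: "\<bar>u x\<bar> \<le> (1 * (u x)^2 + 1/1) / 2" by (rule amgm_abs) simp
      have a2: "\<bar>u' x\<bar> \<le> (q * (u' x)^2 + 1/q) / 2" by (rule amgm_abs[OF q])
      have "\<bar>F x\<bar> \<le> 1/d * \<bar>u x\<bar> + \<bar>g x\<bar> * \<bar>u' x\<bar>"
        unfolding F_def using d by (simp add: abs_mult abs_triangle_ineq4[THEN order_trans])
      also have "\<dots> \<le> 1/d * ((1 * (u x)^2 + 1/1) / 2) + 1 * ((q * (u' x)^2 + 1/q) / 2)"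
        by (intro add_mono mult_left_mono mult_mono a1 a2 g1) (use d in auto)
      also have "\<dots> = R x" unfolding R_def using d q by (simp add: field_simps)
      finally show ?thesis .
    qed
    have up: "(LINT x:{0..d}|lborel. F x) \<le> (LINT x:{0..d}|lborel. R x)"
      by (rule set_integral_mono[OF iF iR]) (use pw in force)
    have lo: "(LINT x:{0..d}|lborel. -1 * F x) \<le> (LINT x:{0..d}|lborel. R x)"
    proof (rule set_integral_mono[OF _ iR])
      show "set_integrable lborel {0..d} (\<lambda>x. -1 * F x)" using iF by (rule set_integrable_mult_right)
      fix x assume "x \<in> {0..d}"
      then show "-1 * F x \<le> R x" using pw[of x] by linarith
    qed
    have "(LINT x:{0..d}|lborel. -1 * F x) = -1 * (LINT x:{0..d}|lborel. F x)" by (rule set_integral_mult_right)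
    then show ?thesis using up lo LR u0F by linarith
  qed
  show ?thesis
  proof (cases "u 0 = 0")
    case True then show ?thesis by simp
  next
    case False
    define q where "q = 1 / (3 * \<bar>u 0\<bar>)"
    have q: "q > 0" using False unfolding q_def by simp
    have k: "\<bar>u 0\<bar> \<le> (A + d) / (2*d) + (q * D + d / q) / 2" by (rule key[OF q])
    have b1: "(A + d) / (2*d) \<le> 5" using A unfolding d_def by simp
    have "q * D \<le> q * (3/2 * (u 0)\<^sup>2)" by (rule mult_left_mono[OF Dle]) (use q in simp)
    also have "\<dots> = \<bar>u 0\<bar> / 2" unfolding q_def using False by (simp add: power2_eq_square field_simps)
    finally have b2: "q * D \<le> \<bar>u 0\<bar> / 2" .
    have b3: "d / q = \<bar>u 0\<bar> / 2" unfolding q_def d_def by simp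
    have aux: "\<And>a X Y Z::real. a \<le> X + (Y + Z)/2 \<Longrightarrow> X \<le> 5 \<Longrightarrow> Y \<le> a/2 \<Longrightarrow> Z = a/2 \<Longrightarrow> a \<le> 10"
      by (simp add: field_simps)
    have "\<bar>u 0\<bar> \<le> 10" by (rule aux[OF k b1 b2 b3])
    then have "\<bar>u 0\<bar>^2 \<le> 10^2" by (rule power_mono) simp
    then show ?thesis by simp
  qed
qed

end

context bt begin

lemma agmon:
  assumes T3: "3 \<le> T" and FD: "form_dom T u u'"
    and W: "\<And>v v'. form_dom T v v' \<Longrightarrow>
        (LBINT x=0..T. u' x * v' x * (1 - B * x)) - u 0 * v 0 = lam * (LBINT x=0..T. u x * v x * (1 - B * x))"
    and lam: "lam \<le> -1/4"
    and nrm: "(LBINT x=0..T. (u x)\<^sup>2 * (1 - B * x)) = 1"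
  shows "(LINT x:{0..T}|lborel. exp (x/2) * (1 - B*x) * (u x)\<^sup>2) \<le> 1600/3"
proof -
  have ui: "set_integrable lborel {0..T} u'" and ui2: "set_integrable lborel {0..T} (\<lambda>x. (u' x)\<^sup>2)"
    and uf: "\<And>x. x \<in> {0..T} \<Longrightarrow> u x = u 0 + (LBINT t=0..x. u' t)" and uT: "u T = 0"
    using FD unfolding form_dom_def H1_with_deriv_def by blast+
  have T0: "0 \<le> T" using Tpos by simp
  have contu: "continuous_on {0..T} u" by (rule ac_continuous[OF T0 ui uf])
  have grd: "(LBINT x=0..T. u' x * u' x * (1 - B*x)) \<le> (u 0)\<^sup>2"
  proof -
    have "(LBINT x=0..T. u' x * u' x * (1 - B * x)) - u 0 * u 0 = lam * (LBINT x=0..T. u x * u x * (1 - B * x))"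
      by (rule W[OF FD])
    moreover have "(LBINT x=0..T. u x * u x * (1 - B * x)) = 1"
      using nrm by (simp add: power2_eq_square)
    ultimately show ?thesis using lam by (simp add: power2_eq_square)
  qed
  have u0: "(u 0)\<^sup>2 \<le> 100" by (rule u0_bound[OF T3 FD nrm grd])
  define e where "e x = exp (x/2)" for x :: real
  have contE: "continuous_on S e" for S unfolding e_def by (intro continuous_intros) auto
  have ed: "(e has_real_derivative 1/2 * e x) (at x within S)" for x S
    unfolding e_def by (auto intro!: derivative_eq_intros)
  define v where "v x = e x * u x" for x
  define v' where "v' x = e x * (1/2 * u x + u' x)" for x
  have epos: "e x > 0" for x unfolding e_def by simp
  have iv': "set_integrable lborel {0..b} v'" if b: "b \<in> {0..T}" for b
  proof -
    have sub: "{0..b} \<subseteq> {0..T}" using b by auto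
    have a1: "set_integrable lborel {0..b} (\<lambda>x. e x * (1/2) * u x)"
      by (rule borel_integrable_atLeastAtMost') (intro continuous_intros contE continuous_on_subset[OF contu sub])
    have a2: "set_integrable lborel {0..b} (\<lambda>x. e x * u' x)"
      by (rule cont_mult_set_integrable[OF contE set_integrable_subset[OF ui _ sub]]) auto
    have "set_integrable lborel {0..b} (\<lambda>x. e x * (1/2) * u x + e x * u' x)" by (rule set_integral_add(1)[OF a1 a2])
    then show ?thesis unfolding v'_def by (simp add: algebra_simps)
  qed
  have vf: "v x = v 0 + (LBINT t=0..x. v' t)" if x: "x \<in> {0..T}" for x
  proof -
    have sub: "{0..x} \<subseteq> {0..T}" using x by auto
    have uix: "set_integrable lborel {0..x} u'" by (rule set_integrable_subset[OF ui _ sub]) auto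
    have ufx: "\<And>y. y \<in> {0..x} \<Longrightarrow> u y = u 0 + (LBINT t=0..y. u' t)" using uf sub by blast
    have gc: "continuous_on {0..x} (\<lambda>y. 1/2 * e y)" by (intro continuous_intros contE)
    have I: "(LBINT y=0..x. e y * u' y) = e x * u x - e 0 * u 0 - (LBINT y=0..x. 1/2 * e y * u y)"
      by (rule ibp[OF _ ed gc uix ufx]) (use x in auto)
    have a1: "set_integrable lborel {0..x} (\<lambda>y. 1/2 * e y * u y)"
      by (rule borel_integrable_atLeastAtMost') (intro continuous_intros contE continuous_on_subset[OF contu sub])
    have a2: "set_integrable lborel {0..x} (\<lambda>y. e y * u' y)"
      by (rule cont_mult_set_integrable[OF contE uix])
    have x0: "0 \<le> x" using x by simp
    have "(LBINT t=0..x. v' t) = (LINT t:{0..x}|lborel. 1/2 * e t * u t + e t * u' t)"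
      unfolding interval_integral_Icc0[OF x0] v'_def by (rule set_lebesgue_integral_cong) (auto simp: algebra_simps)
    also have "\<dots> = (LINT t:{0..x}|lborel. 1/2 * e t * u t) + (LINT t:{0..x}|lborel. e t * u' t)"
      by (rule set_integral_add(2)[OF a1 a2])
    also have "\<dots> = e x * u x - e 0 * u 0" using I unfolding interval_integral_Icc0[OF x0] by simp
    finally show ?thesis unfolding v_def by (simp add: e_def)
  qed
  have iv'2: "set_integrable lborel {0..T} (\<lambda>x. (v' x)\<^sup>2)"
  proof -
    have a1: "set_integrable lborel {0..T} (\<lambda>x. (e x)^2 * (1/4) * (u x)^2)"
      by (rule borel_integrable_atLeastAtMost') (intro continuous_intros contE contu)
    have a2: "set_integrable lborel {0..T} (\<lambda>x. ((e x)^2 * u x) * u' x)"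
      by (rule cont_mult_set_integrable[OF _ ui]) (intro continuous_intros contE contu)
    have a3: "set_integrable lborel {0..T} (\<lambda>x. (e x)^2 * (u' x)^2)"
      by (rule cont_mult_set_integrable[OF _ ui2]) (intro continuous_intros contE)
    have "set_integrable lborel {0..T} (\<lambda>x. (e x)^2 * (1/4) * (u x)^2 + ((e x)^2 * u x) * u' x + (e x)^2 * (u' x)^2)"
      by (intro set_integral_add(1) a1 a2 a3)
    then show ?thesis unfolding v'_def by (simp add: power2_eq_square algebra_simps)
  qed
  have vT: "v T = 0" unfolding v_def using uT by simp
  have FDv: "form_dom T v v'"
    unfolding form_dom_def H1_with_deriv_def
  proof (intro conjI ballI)
    show "set_integrable lborel {0..T} v'" using iv'[of T] T0 by simp
  qed (use iv'2 vf vT in blast)+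
  have Wv: "(LBINT x=0..T. u' x * v' x * (1 - B * x)) - u 0 * v 0 = lam * (LBINT x=0..T. u x * v x * (1 - B * x))"
    by (rule W[OF FDv])
  define I where "I = (LINT x:{0..T}|lborel. e x * (1 - B*x) * (u x)\<^sup>2)"
  define J where "J = (LINT x:{0..T}|lborel. e x * (1 - B*x) * (u' x + 1/4 * u x)\<^sup>2)"
  have iI: "set_integrable lborel {0..T} (\<lambda>x. e x * (1 - B*x) * (u x)\<^sup>2)"
    by (rule borel_integrable_atLeastAtMost') (intro continuous_intros contE contu)
  have iI2: "set_integrable lborel {0..T} (\<lambda>x. 1/16 * (e x * (1 - B*x) * (u x)\<^sup>2))"
    using iI by simp
  have iJ: "set_integrable lborel {0..T} (\<lambda>x. e x * (1 - B*x) * (u' x + 1/4 * u x)\<^sup>2)"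
  proof -
    have a1: "set_integrable lborel {0..T} (\<lambda>x. e x * (1 - B*x) * (1/16) * (u x)^2)"
      by (rule borel_integrable_atLeastAtMost') (intro continuous_intros contE contu)
    have a2: "set_integrable lborel {0..T} (\<lambda>x. (e x * (1 - B*x) * (1/2) * u x) * u' x)"
      by (rule cont_mult_set_integrable[OF _ ui]) (intro continuous_intros contE contu)
    have a3: "set_integrable lborel {0..T} (\<lambda>x. (e x * (1 - B*x)) * (u' x)^2)"
      by (rule cont_mult_set_integrable[OF _ ui2]) (intro continuous_intros contE)
    have "set_integrable lborel {0..T} (\<lambda>x. e x * (1 - B*x) * (1/16) * (u x)^2 + (e x * (1 - B*x) * (1/2) * u x) * u' x + (e x * (1 - B*x)) * (u' x)^2)"
      by (intro set_integral_add(1) a1 a2 a3)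
    moreover have "(\<lambda>x. e x * (1 - B*x) * (1/16) * (u x)^2 + (e x * (1 - B*x) * (1/2) * u x) * u' x + (e x * (1 - B*x)) * (u' x)^2)
       = (\<lambda>x. e x * (1 - B*x) * (u' x + 1/4 * u x)\<^sup>2)"
      by (rule ext) (simp add: power2_eq_square field_simps)
    ultimately show ?thesis by simp
  qed
  have L1: "(LBINT x=0..T. u' x * v' x * (1 - B * x)) = J - 1/16 * I"
  proof -
    have "(LBINT x=0..T. u' x * v' x * (1 - B * x))
        = (LINT x:{0..T}|lborel. e x * (1 - B*x) * (u' x + 1/4 * u x)\<^sup>2 - 1/16 * (e x * (1 - B*x) * (u x)\<^sup>2))"
      unfolding interval_integral_Icc0[OF T0] v'_def
      by (rule set_lebesgue_integral_cong) (auto simp: power2_eq_square field_simps)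
    also have "\<dots> = J - (LINT x:{0..T}|lborel. 1/16 * (e x * (1 - B*x) * (u x)\<^sup>2))"
      unfolding J_def by (rule set_integral_diff(2)[OF iJ iI2])
    also have "(LINT x:{0..T}|lborel. 1/16 * (e x * (1 - B*x) * (u x)\<^sup>2)) = 1/16 * I"
      unfolding I_def by (rule set_integral_mult_right)
    finally show ?thesis .
  qed
  have L2: "(LBINT x=0..T. u x * v x * (1 - B * x)) = I"
    unfolding interval_integral_Icc0[OF T0] I_def v_def
    by (rule set_lebesgue_integral_cong) (auto simp: power2_eq_square algebra_simps)
  have v0: "v 0 = u 0" unfolding v_def e_def by simp
  have rn: "0 \<le> e x * (1 - B*x)" if "x \<in> {0..T}" for x
    using rho_bounds(3)[OF that] epos[of x] by simp
  have Jnn: "0 \<le> J" unfolding J_def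
    by (rule set_int_nonneg[OF iJ]) (use rn in simp)
  have Inn: "0 \<le> I" unfolding I_def
    by (rule set_int_nonneg[OF iI]) (use rn in simp)
  have eq: "J - 1/16 * I - (u 0)\<^sup>2 = lam * I" using Wv unfolding L1 L2 v0 by (simp add: power2_eq_square)
  have "3/16 * I \<le> (- lam - 1/16) * I" by (rule mult_right_mono) (use lam Inn in auto)
  also have "\<dots> = (u 0)\<^sup>2 - J" using eq by (simp add: algebra_simps)
  also have "\<dots> \<le> 100" using u0 Jnn by simp
  finally have "I \<le> 1600/3" by simp
  then show ?thesis unfolding I_def e_def .
qed

end

lemma main_bound:
  fixes T B lam :: real and u :: "real \<Rightarrow> real"
  assumes T: "3 \<le> T" and Bb: "\<bar>B\<bar> < 1 / (3 * T)" and G: "is_normalized_ground_state B T lam u"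
  shows "sqrt (LBINT x=0..T. (exp (1/4 * x) * sqrt (1 - B * x) * u x)\<^sup>2) \<le> 24"
proof -
  have Tp: "0 < T" using T by simp
  have "\<bar>B\<bar> * T < 1 / (3 * T) * T" by (rule mult_strict_right_mono[OF Bb Tp])
  then have BT: "\<bar>B\<bar> * T < 1/3" using Tp by simp
  interpret bt B T by unfold_locales (use Tp BT in auto)
  have T0: "0 \<le> T" using Tp by simp
  obtain u' where FD: "form_dom T u u'"
    and W: "\<forall>v v'. form_dom T v v' \<longrightarrow>
        (LBINT x=0..T. u' x * v' x * (1 - B * x)) - u 0 * v 0 = lam * (LBINT x=0..T. u x * v x * (1 - B * x))"
    using G unfolding is_normalized_ground_state_def is_eigenpair_def by blast
  have minl: "\<And>mu v. is_eigenpair B T mu v \<Longrightarrow> lam \<le> mu"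
    and nrm: "(LBINT x=0..T. (u x)\<^sup>2 * (1 - B * x)) = 1"
    using G unfolding is_normalized_ground_state_def by blast+
  obtain mu v where "mu \<le> -1/4" "is_eigenpair B T mu v" using exists_neg_eigenpair[OF T] by blast
  then have lam: "lam \<le> -1/4" using minl by force
  have ag: "(LINT x:{0..T}|lborel. exp (x/2) * (1 - B*x) * (u x)\<^sup>2) \<le> 1600/3"
    by (rule agmon[OF T FD _ lam nrm]) (use W in blast)
  have eqI: "(LBINT x=0..T. (exp (1/4 * x) * sqrt (1 - B * x) * u x)\<^sup>2)
      = (LINT x:{0..T}|lborel. exp (x/2) * (1 - B*x) * (u x)\<^sup>2)"
  proof -
    have "(LINT x:{0..T}|lborel. (exp (1/4 * x) * sqrt (1 - B * x) * u x)\<^sup>2)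
        = (LINT x:{0..T}|lborel. exp (x/2) * (1 - B*x) * (u x)\<^sup>2)"
    proof (rule set_lebesgue_integral_cong)
      show "{0..T} \<in> sets lborel" by simp
      show "\<forall>x. x \<in> {0..T} \<longrightarrow> (exp (1/4 * x) * sqrt (1 - B * x) * u x)\<^sup>2 = exp (x/2) * (1 - B*x) * (u x)\<^sup>2"
      proof (intro allI impI)
        fix x assume x: "x \<in> {0..T}"
        have r: "0 \<le> 1 - B*x" using rho_bounds(3)[OF x] by simp
        have e: "(exp (1/4 * x))\<^sup>2 = exp (x/2)"
          by (simp add: power2_eq_square exp_add[symmetric])
        have "(exp (1/4 * x) * sqrt (1 - B * x) * u x)\<^sup>2 = (exp (1/4 * x))\<^sup>2 * (sqrt (1 - B * x))\<^sup>2 * (u x)\<^sup>2"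
          by (simp add: power_mult_distrib)
        also have "\<dots> = exp (x/2) * (1 - B*x) * (u x)\<^sup>2" using r e by simp
        finally show "(exp (1/4 * x) * sqrt (1 - B * x) * u x)\<^sup>2 = exp (x/2) * (1 - B*x) * (u x)\<^sup>2" .
      qed
    qed
    then show ?thesis using interval_integral_Icc0[OF T0] by simp
  qed
  have "sqrt (LBINT x=0..T. (exp (1/4 * x) * sqrt (1 - B * x) * u x)\<^sup>2) \<le> sqrt (24^2)"
    unfolding eqI by (rule real_sqrt_le_mono) (use ag in simp)
  then show ?thesis by simp
qed

theorem mainTheorem13:
  shows "\<exists>C>0. \<exists>\<alpha>>0. \<exists>T0>0. \<forall>T\<ge>T0. \<forall>B::real. \<bar>B\<bar> < 1 / (3 * T) \<longrightarrow>
           (\<forall>lam u. is_normalized_ground_state B T lam u \<longrightarrow>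
              sqrt (LBINT x=0..T. (exp (\<alpha> * x) * sqrt (1 - B * x) * u x)\<^sup>2) \<le> C)"
  by (intro exI[of _ 24] exI[of _ "1/4"] exI[of _ 3] conjI allI impI main_bound) auto

end
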